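(* Let $\mathcal{M}:R\to A_2B_2$ be a quantum channel with $B_2$ classical such that for every register $R'$ and every state $\omega_{RR'}$, $\rho_{A_2B_2R'}=\mathcal{M}(\omega_{RR'})$ satisfies $\rho_{B_2R'}=\rho_{B_2}\otimes\omega_{R'}$. Let $\omega_{A_1B_1R}$ be a state and $\rho_{A_1B_1A_2B_2}=\mathcal{M}(\omega_{A_1B_1R})$. Let $\nu_{A_1B_1A_2B_2}$ be any state with $\nu_{A_2B_2|A_1B_1}=\rho_{A_2B_2|A_1B_1}$ and $\mathrm{supp}(\nu_{A_1B_1})=\mathrm{supp}(\rho_{A_1B_1})$. Then there exists a state $\omega'_{A_1B_1R}$ with $\mathcal{M}(\omega'_{A_1B_1R})=\nu_{A_1B_1A_2B_2}$.
   Context: All spaces finite-dimensional. For a state $\rho_{XY}$, the conditional operator is $\rho_{X|Y}=\rho_Y^{-1/2}\rho_{XY}\rho_Y^{-1/2}$, with the inverse taken on the support of $\rho_Y$. Channels act as the identity on systems they do not act on. *)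

theory Defs
  imports "Jordan_Normal_Form.Schur_Decomposition"
begin

(* Conventions: a register of dimension d is C^d; operators are complex d x d matrices.
   Tensor products use the Kronecker convention: for X (x) Y, index (i,j) of X and
   (k,l) of Y become index (i*dY + k, j*dY + l). *)

definition mtrace :: "complex mat \<Rightarrow> complex" where
  "mtrace A = (\<Sum>i<dim_row A. A $$ (i,i))"

definition psd :: "nat \<Rightarrow> complex mat \<Rightarrow> bool" where
  "psd n A \<longleftrightarrow> A \<in> carrier_mat n n \<and>
     (\<forall>v \<in> carrier_vec n. Im (conjugate v \<bullet> (A *\<^sub>v v)) = 0 \<and> Re (conjugate v \<bullet> (A *\<^sub>v v)) \<ge> 0)"

definition density :: "nat \<Rightarrow> complex mat \<Rightarrow> bool" where
  "density n A \<longleftrightarrow> psd n A \<and> mtrace A = 1"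

definition tensor_mat :: "complex mat \<Rightarrow> complex mat \<Rightarrow> complex mat" where
  "tensor_mat A B = mat (dim_row A * dim_row B) (dim_col A * dim_col B)
     (\<lambda>(i,j). A $$ (i div dim_row B, j div dim_col B) * B $$ (i mod dim_row B, j mod dim_col B))"

definition ptrace_right :: "nat \<Rightarrow> nat \<Rightarrow> complex mat \<Rightarrow> complex mat" where
  "ptrace_right dX dY A = mat dX dX (\<lambda>(i,j). \<Sum>k<dY. A $$ (i*dY + k, j*dY + k))"

definition ptrace_left :: "nat \<Rightarrow> nat \<Rightarrow> complex mat \<Rightarrow> complex mat" where
  "ptrace_left dX dY A = mat dY dY (\<lambda>(i,j). \<Sum>k<dX. A $$ (k*dY + i, k*dY + j))"

(* trace out the middle factor Y of X (x) Y (x) Z, leaving X (x) Z *)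
definition ptrace_mid :: "nat \<Rightarrow> nat \<Rightarrow> nat \<Rightarrow> complex mat \<Rightarrow> complex mat" where
  "ptrace_mid dX dY dZ A = mat (dX*dZ) (dX*dZ) (\<lambda>(i,j). \<Sum>k<dY.
      A $$ (((i div dZ)*dY + k)*dZ + i mod dZ, ((j div dZ)*dY + k)*dZ + j mod dZ))"

(* id_n (x) M applied to an operator on C^n (x) C^dI (blockwise application of M);
   the untouched register comes first. *)
definition ext_chan :: "nat \<Rightarrow> nat \<Rightarrow> nat \<Rightarrow> (complex mat \<Rightarrow> complex mat) \<Rightarrow> complex mat \<Rightarrow> complex mat" where
  "ext_chan n dI dO M X = mat (n*dO) (n*dO) (\<lambda>(i,j).
      M (mat dI dI (\<lambda>(k,l). X $$ ((i div dO)*dI + k, (j div dO)*dI + l))) $$ (i mod dO, j mod dO))"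

definition quantum_channel :: "nat \<Rightarrow> nat \<Rightarrow> (complex mat \<Rightarrow> complex mat) \<Rightarrow> bool" where
  "quantum_channel dI dO M \<longleftrightarrow>
     (\<forall>X \<in> carrier_mat dI dI. M X \<in> carrier_mat dO dO) \<and>
     (\<forall>X \<in> carrier_mat dI dI. \<forall>Y \<in> carrier_mat dI dI. M (X + Y) = M X + M Y) \<and>
     (\<forall>X \<in> carrier_mat dI dI. \<forall>c. M (c \<cdot>\<^sub>m X) = c \<cdot>\<^sub>m M X) \<and>
     (\<forall>X \<in> carrier_mat dI dI. mtrace (M X) = mtrace X) \<and>
     (\<forall>n X. psd (n*dI) X \<longrightarrow> psd (n*dO) (ext_chan n dI dO M X))"

definition unitary_mat :: "nat \<Rightarrow> complex mat \<Rightarrow> bool" where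
  "unitary_mat n U \<longleftrightarrow> U \<in> carrier_mat n n \<and> mat_adjoint U * U = 1\<^sub>m n \<and> U * mat_adjoint U = 1\<^sub>m n"

definition mat_fun :: "(real \<Rightarrow> real) \<Rightarrow> complex mat \<Rightarrow> complex mat" where
  "mat_fun f A = (SOME B. \<exists>U d. unitary_mat (dim_row A) U \<and>
      A = U * mat_diag (dim_row A) (\<lambda>i. complex_of_real (d i)) * mat_adjoint U \<and>
      B = U * mat_diag (dim_row A) (\<lambda>i. complex_of_real (f (d i))) * mat_adjoint U)"

definition inv_sqrt_supp :: "complex mat \<Rightarrow> complex mat" where
  "inv_sqrt_supp A = mat_fun (\<lambda>x. if x > 0 then 1 / sqrt x else 0) A"

(* conditional operator rho_{X|Y} for rho on Y (x) X (conditioning register Y first) *)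
definition cond_op :: "nat \<Rightarrow> nat \<Rightarrow> complex mat \<Rightarrow> complex mat" where
  "cond_op dY dX rho =
     (let S = tensor_mat (inv_sqrt_supp (ptrace_right dY dX rho)) (1\<^sub>m dX) in S * rho * S)"

definition supp :: "complex mat \<Rightarrow> complex vec set" where
  "supp A = {A *\<^sub>v v | v. v \<in> carrier_vec (dim_col A)}"

(* the output register B (second factor of A (x) B) is classical: outputs are
   block diagonal w.r.t. the computational basis of B *)
definition classical_output_B :: "nat \<Rightarrow> nat \<Rightarrow> nat \<Rightarrow> (complex mat \<Rightarrow> complex mat) \<Rightarrow> bool" where
  "classical_output_B dI dA dB M \<longleftrightarrow>
     (\<forall>X. density dI X \<longrightarrow> (\<forall>i j. i < dA*dB \<longrightarrow> j < dA*dB \<longrightarrow> i mod dB \<noteq> j mod dB \<longrightarrow> M X $$ (i,j) = 0))"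

end

theory Submission
  imports Defs
begin


lemma mult_entry:
  assumes "A \<in> carrier_mat r n" "B \<in> carrier_mat n c" "i < r" "j < c"
  shows "(A * B) $$ (i,j) = (\<Sum>k<n. A $$ (i,k) * B $$ (k,j))"
  using assms by (simp add: scalar_prod_def lessThan_atLeast0)

lemma adj_dim[simp]: "dim_row (mat_adjoint A) = dim_col A" "dim_col (mat_adjoint A) = dim_row A"
  unfolding mat_adjoint_def by auto

lemma adj_carrier: "A \<in> carrier_mat r c \<Longrightarrow> mat_adjoint A \<in> carrier_mat c r"
  unfolding carrier_mat_def by simp

lemma adj_entry[simp]: fixes A :: "complex mat" shows "i < dim_col A \<Longrightarrow> j < dim_row A \<Longrightarrow> mat_adjoint A $$ (i,j) = cnj (A $$ (j,i))"
  unfolding mat_adjoint_def by (simp add: mat_of_rows_def)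

lemma adj_adj: "mat_adjoint (mat_adjoint A) = (A :: complex mat)"
proof (rule eq_matI)
  fix i j assume "i < dim_row A" "j < dim_col A"
  then show "mat_adjoint (mat_adjoint A) $$ (i,j) = A $$ (i,j)" by simp
qed simp_all

lemma adj_mult: fixes A B :: "complex mat" assumes "A \<in> carrier_mat r n" "B \<in> carrier_mat n c"
  shows "mat_adjoint (A * B) = mat_adjoint B * mat_adjoint A"
proof (rule eq_matI)
  fix i j assume "i < dim_row (mat_adjoint B * mat_adjoint A)" "j < dim_col (mat_adjoint B * mat_adjoint A)"
  then have ij: "i < c" "j < r" using assms by auto
  have "mat_adjoint (A * B) $$ (i,j) = cnj ((A*B) $$ (j,i))" using ij assms by simp
  also have "\<dots> = (\<Sum>k<n. cnj (A $$ (j,k)) * cnj (B $$ (k,i)))" using mult_entry[OF assms ij(2) ij(1)] by simp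
  also have "\<dots> = (mat_adjoint B * mat_adjoint A) $$ (i,j)"
    by (subst mult_entry[OF adj_carrier[OF assms(2)] adj_carrier[OF assms(1)] ij], insert assms ij, simp add: mult.commute)
  finally show "mat_adjoint (A * B) $$ (i, j) = (mat_adjoint B * mat_adjoint A) $$ (i, j)" .
next
  show "dim_row (mat_adjoint (A * B)) = dim_row (mat_adjoint B * mat_adjoint A)" using assms by simp
  show "dim_col (mat_adjoint (A * B)) = dim_col (mat_adjoint B * mat_adjoint A)" using assms by simp
qed

lemma adj_one[simp]: "mat_adjoint (1\<^sub>m n) = (1\<^sub>m n :: complex mat)"
proof (rule eq_matI)
  fix i j assume "i < dim_row (1\<^sub>m n :: complex mat)" "j < dim_col (1\<^sub>m n :: complex mat)"
  then show "mat_adjoint (1\<^sub>m n) $$ (i,j) = (1\<^sub>m n :: complex mat) $$ (i,j)"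
    by (cases "i = j", simp_all)
qed simp_all

lemma mtrace_alt: "A \<in> carrier_mat n n \<Longrightarrow> mtrace A = (\<Sum>i<n. A $$ (i,i))"
  unfolding mtrace_def by simp

lemma sum_split_mult: "(\<Sum>x<n*m. f x) = (\<Sum>a<n. \<Sum>k<m. f (a*m+k :: nat)) "
proof (induction n)
  case 0 then show ?case by simp
next
  case (Suc n)
  have e: "{..<Suc n*m} = {..<n*m} \<union> {n*m..<n*m+m}" by auto
  have "(\<Sum>x<Suc n*m. f x) = (\<Sum>x<n*m. f x) + (\<Sum>x\<in>{n*m..<n*m+m}. f x)"
    unfolding e by (rule sum.union_disjoint, auto)
  also have "(\<Sum>x\<in>{n*m..<n*m+m}. f x) = (\<Sum>k<m. f (n*m+k))"
    using sum.shift_bounds_nat_ivl[of f 0 "n*m" m] by (simp add: atLeast0LessThan add.commute)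
  finally show ?case using Suc by simp
qed

lemma divmod_lt: assumes "(x::nat) < n*m" shows "x div m < n" "x mod m < m"
proof -
  from assms have m: "m > 0" by (cases m, auto)
  show "x mod m < m" using m by simp
  show "x div m < n" using assms by (simp add: less_mult_imp_div_less)
qed

lemma idx_lt: assumes "a < n" "k < (m::nat)" shows "a*m+k < n*m"
proof -
  have "a*m + k < a*m + m" using assms by simp
  also have "\<dots> = (a+1)*m" by simp
  also have "\<dots> \<le> n*m" using assms by (intro mult_right_mono, auto)
  finally show ?thesis .
qed

lemma idx_div[simp]: "k < (m::nat) \<Longrightarrow> (a*m+k) div m = a" by simp
lemma idx_mod[simp]: "k < (m::nat) \<Longrightarrow> (a*m+k) mod m = k" by simp



lemma cprod_sum: "v \<in> carrier_vec n \<Longrightarrow> w \<in> carrier_vec n \<Longrightarrow> v \<bullet>c w = (\<Sum>k<n. v$k * cnj (w$k))"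
  by (simp add: scalar_prod_def lessThan_atLeast0)

lemma real_cplx: "Im z = 0 \<Longrightarrow> z = complex_of_real (Re z)" by (simp add: complex_eq_iff)

lemma cplx_pos: "0 \<le> (z::complex) \<Longrightarrow> z \<noteq> 0 \<Longrightarrow> Re z > 0 \<and> z = complex_of_real (Re z)"
  by (auto simp: less_eq_complex_def complex_eq_iff)

lemma cnorm_props: fixes w :: "complex vec" assumes "w \<in> carrier_vec n" "w \<noteq> 0\<^sub>v n"
  shows "Re (w \<bullet>c w) > 0" "w \<bullet>c w = complex_of_real (Re (w \<bullet>c w))"
proof -
  have ge: "w \<bullet>c w \<ge> 0" by (rule conjugate_square_ge_0_vec)
  have ne: "w \<bullet>c w \<noteq> 0" using conjugate_square_eq_0_vec[OF assms(1)] assms(2) by blast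
  note c = cplx_pos[OF ge ne]
  show "Re (w \<bullet>c w) > 0" using c by blast
  show "w \<bullet>c w = complex_of_real (Re (w \<bullet>c w))" using c by blast
qed

lemma unitaryD: assumes "unitary_mat n U"
  shows "U \<in> carrier_mat n n" "mat_adjoint U * U = 1\<^sub>m n" "U * mat_adjoint U = 1\<^sub>m n"
  using assms unfolding unitary_mat_def by blast+

lemma orth_complete:
  fixes v :: "complex vec"
  assumes v: "v \<in> carrier_vec n" and v1: "v \<bullet>c v = 1"
  shows "\<exists>ws. set ws \<subseteq> carrier_vec n \<and> corthogonal ws \<and> length ws = n \<and> ws ! 0 = v \<and> n > 0"
proof -
  have v0: "v \<noteq> 0\<^sub>v n"
  proof
    assume "v = 0\<^sub>v n" then have "v \<bullet>c v = 0" by simp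
    with v1 show False by simp
  qed
  have n0: "n > 0"
  proof (rule ccontr)
    assume "\<not> n > 0" then have "n = 0" by simp
    then have "v \<bullet>c v = 0" using cprod_sum[OF v v] by simp
    with v1 show False by simp
  qed
  interpret cof_vec_space n "TYPE(complex)" .
  define b where "b = basis_completion v"
  note bc = basis_completion[OF v v0, folded b_def]
  define ws where "ws = gram_schmidt n b"
  note gs = gram_schmidt_result[OF bc(2) bc(4) bc(5) ws_def]
  have bne: "b \<noteq> []" using bc(6) n0 by (cases b) simp_all
  have bv: "b = v # tl b" using bne bc(7) by (cases b) simp_all
  have hd: "hd ws = v" unfolding ws_def by (subst bv) (rule gram_schmidt_hd[OF v])
  have lws: "length ws = n" using gs(4) bc(6) by simp
  have wne: "ws \<noteq> []" using lws n0 by (cases ws) simp_all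
  have ws0: "ws ! 0 = v" using hd wne by (cases ws) simp_all
  show ?thesis using gs(2,3) lws ws0 n0 by blast
qed

lemma unit_complete:
  fixes v :: "complex vec"
  assumes v: "v \<in> carrier_vec n" and v1: "v \<bullet>c v = 1"
  shows "\<exists>W. unitary_mat n W \<and> (\<forall>i<n. W $$ (i,0) = v $ i)"
proof -
  obtain ws where gs: "set ws \<subseteq> carrier_vec n" "corthogonal ws" and lws: "length ws = n"
    and ws0: "ws ! 0 = v" and n0: "n > 0" using orth_complete[OF v v1] by blast
  have wsc: "\<And>k. k < n \<Longrightarrow> ws ! k \<in> carrier_vec n" using gs(1) lws nth_mem by blast
  have wsnz: "\<And>k. k < n \<Longrightarrow> ws ! k \<noteq> 0\<^sub>v n"
  proof -
    fix k assume k: "k < n"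
    have "ws ! k \<bullet>c ws ! k \<noteq> 0" using corthogonalD[OF gs(2), of k k] k lws by simp
    then show "ws ! k \<noteq> 0\<^sub>v n" by (intro notI) simp
  qed
  define nr where "nr = (\<lambda>w. sqrt (Re (w \<bullet>c w)))"
  have nrpos: "\<And>k. k < n \<Longrightarrow> nr (ws!k) > 0" unfolding nr_def using cnorm_props(1)[OF wsc wsnz] by simp
  have nrsq: "\<And>k. k < n \<Longrightarrow> ws!k \<bullet>c ws!k = complex_of_real (nr (ws!k) * nr (ws!k))"
  proof -
    fix k assume k: "k < n"
    have "Re (ws!k \<bullet>c ws!k) \<ge> 0" using cnorm_props(1)[OF wsc[OF k] wsnz[OF k]] by simp
    then show "ws!k \<bullet>c ws!k = complex_of_real (nr (ws!k) * nr (ws!k))"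
      unfolding nr_def using cnorm_props(2)[OF wsc[OF k] wsnz[OF k]] by simp
  qed
  define us where "us = map (\<lambda>w. (complex_of_real (1 / nr w)) \<cdot>\<^sub>v w) ws"
  define W where "W = mat_of_cols n us"
  have lus: "length us = n" unfolding us_def using lws by simp
  have Wc: "W \<in> carrier_mat n n" unfolding W_def using mat_of_cols_carrier(1)[of n us] lus by simp
  have We: "\<And>i j. i < n \<Longrightarrow> j < n \<Longrightarrow> W $$ (i,j) = complex_of_real (1 / nr (ws!j)) * (ws!j $ i)"
  proof -
    fix i j assume ij: "i < n" "j < n"
    have d: "dim_vec (ws!j) = n" using wsc[OF ij(2)] by auto
    show "W $$ (i,j) = complex_of_real (1 / nr (ws!j)) * (ws!j $ i)"
      unfolding W_def using lus lws ij d by (simp add: mat_of_cols_index us_def)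
  qed
  have WW: "mat_adjoint W * W = 1\<^sub>m n"
  proof (rule eq_matI)
    fix i j assume "i < dim_row (1\<^sub>m n :: complex mat)" "j < dim_col (1\<^sub>m n :: complex mat)"
    then have ij: "i < n" "j < n" by auto
    have "(mat_adjoint W * W) $$ (i,j) = (\<Sum>k<n. cnj (W $$ (k,i)) * W $$ (k,j))"
      using mult_entry[OF adj_carrier[OF Wc] Wc ij] Wc ij by simp
    also have "\<dots> = (\<Sum>k<n. (complex_of_real (1 / nr (ws!i)) * complex_of_real (1 / nr (ws!j))) * ((ws!j $ k) * cnj (ws!i $ k)))"
      by (rule sum.cong, simp, simp add: We ij)
    also have "\<dots> = complex_of_real (1 / nr (ws!i)) * complex_of_real (1 / nr (ws!j)) * (ws!j \<bullet>c ws!i)"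
      by (simp add: sum_distrib_left[symmetric] cprod_sum[OF wsc[OF ij(2)] wsc[OF ij(1)]] sum_divide_distrib)
    also have "\<dots> = (1\<^sub>m n :: complex mat) $$ (i,j)"
    proof (cases "i = j")
      case True
      have "nr (ws!j) > 0" using nrpos ij by simp
      then show ?thesis using True nrsq[OF ij(2)] ij by (simp add: field_simps)
    next
      case False
      have "ws!j \<bullet>c ws!i = 0" using corthogonalD[OF gs(2), of j i] False ij lws by simp
      then show ?thesis using False ij by simp
    qed
    finally show "(mat_adjoint W * W) $$ (i,j) = (1\<^sub>m n :: complex mat) $$ (i,j)" .
  qed (insert Wc, simp_all)
  have WW2: "W * mat_adjoint W = 1\<^sub>m n"
    by (rule mat_mult_left_right_inverse[OF adj_carrier[OF Wc] Wc WW])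
  have "unitary_mat n W" unfolding unitary_mat_def using Wc WW WW2 by simp
  moreover have "\<forall>i<n. W $$ (i,0) = v $ i"
  proof (intro allI impI)
    fix i assume i: "i < n"
    have "nr v = 1" unfolding nr_def using v1 by simp
    then show "W $$ (i,0) = v $ i" using We[OF i n0] ws0 by simp
  qed
  ultimately show ?thesis by blast
qed



definition herm :: "nat \<Rightarrow> complex mat \<Rightarrow> bool" where
  "herm n A \<longleftrightarrow> A \<in> carrier_mat n n \<and> mat_adjoint A = A"

lemma herm_entry: assumes "herm n A" "i < n" "j < n" shows "A $$ (j,i) = cnj (A $$ (i,j))"
proof -
  have c: "A \<in> carrier_mat n n" and e: "mat_adjoint A = A" using assms(1) unfolding herm_def by blast+
  have "mat_adjoint A $$ (j,i) = cnj (A $$ (i,j))" using c assms(2,3) by simp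
  then show ?thesis using e by simp
qed

lemma herm_intro: assumes c: "A \<in> carrier_mat n n" and e: "\<And>i j. i < n \<Longrightarrow> j < n \<Longrightarrow> A $$ (j,i) = cnj (A $$ (i,j))"
  shows "herm n A"
proof -
  have "mat_adjoint A = A"
  proof (rule eq_matI)
    fix i j assume "i < dim_row A" "j < dim_col A"
    then have ij: "i < n" "j < n" using c by auto
    show "mat_adjoint A $$ (i,j) = A $$ (i,j)" using c ij e[OF ij(2) ij(1)] by simp
  qed (insert c, simp_all)
  then show ?thesis using c unfolding herm_def by blast
qed

lemma mult3_entry:
  assumes "A \<in> carrier_mat r n" "B \<in> carrier_mat n m" "C \<in> carrier_mat m c" "i < r" "j < c"
  shows "(A * B * C) $$ (i,j) = (\<Sum>k<n. \<Sum>l<m. A $$ (i,k) * B $$ (k,l) * C $$ (l,j))"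
proof -
  have AB: "A * B \<in> carrier_mat r m" using assms(1,2) by (rule mult_carrier_mat)
  have "(A * B * C) $$ (i,j) = (\<Sum>l<m. (A*B) $$ (i,l) * C $$ (l,j))" by (rule mult_entry[OF AB assms(3,4,5)])
  also have "\<dots> = (\<Sum>l<m. (\<Sum>k<n. A $$ (i,k) * B $$ (k,l)) * C $$ (l,j))"
    by (rule sum.cong, simp, subst mult_entry[OF assms(1,2) assms(4)], simp_all)
  also have "\<dots> = (\<Sum>l<m. \<Sum>k<n. A $$ (i,k) * B $$ (k,l) * C $$ (l,j))"
    by (simp add: sum_distrib_right)
  also have "\<dots> = (\<Sum>k<n. \<Sum>l<m. A $$ (i,k) * B $$ (k,l) * C $$ (l,j))"
    by (rule sum.swap)
  finally show ?thesis .
qed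

lemma udu_entry:
  assumes "U \<in> carrier_mat n n" "i < n" "j < n"
  shows "(U * mat_diag n f * mat_adjoint U) $$ (i,j) = (\<Sum>k<n. U $$ (i,k) * f k * cnj (U $$ (j,k)))"
proof -
  have e: "U * mat_diag n f = mat n n (\<lambda>(i,j). U $$ (i,j) * f j)" by (rule mat_diag_mult_right[OF assms(1)])
  have c: "mat n n (\<lambda>(i,j). U $$ (i,j) * f j) \<in> carrier_mat n n" by simp
  show ?thesis unfolding e
    by (subst mult_entry[OF c adj_carrier[OF assms(1)] assms(2,3)], rule sum.cong, simp, insert assms, simp)
qed

lemma mat_vec_entry: "A \<in> carrier_mat r n \<Longrightarrow> v \<in> carrier_vec n \<Longrightarrow> i < r \<Longrightarrow> (A *\<^sub>v v) $ i = (\<Sum>k<n. A $$ (i,k) * v $ k)"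
  by (simp add: scalar_prod_def lessThan_atLeast0)



lemma unit_eigvec:
  fixes A :: "complex mat"
  assumes A: "A \<in> carrier_mat n n" and n: "n > 0"
  shows "\<exists>v a. v \<in> carrier_vec n \<and> v \<bullet>c v = 1 \<and> A *\<^sub>v v = a \<cdot>\<^sub>v v"
proof -
  obtain as where cp: "char_poly A = (\<Prod>a\<leftarrow>as. [:- a, 1:])" and las: "length as = n"
    using char_poly_factorized[OF A] by blast
  obtain a rest where as: "as = a # rest" using las n by (cases as) simp_all
  have "poly (char_poly A) a = 0" unfolding cp as by simp
  then have "eigenvalue A a" using eigenvalue_root_char_poly[OF A] by simp
  then obtain v where ev: "eigenvector A v a" unfolding eigenvalue_def by blast
  have v: "v \<in> carrier_vec n" and v0: "v \<noteq> 0\<^sub>v n" and Av: "A *\<^sub>v v = a \<cdot>\<^sub>v v"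
    using ev A unfolding eigenvector_def by simp_all
  define r where "r = Re (v \<bullet>c v)"
  have r: "r > 0" "v \<bullet>c v = complex_of_real r" using cnorm_props[OF v v0] unfolding r_def by simp_all
  define c where "c = complex_of_real (1 / sqrt r)"
  define v1 where "v1 = c \<cdot>\<^sub>v v"
  have v1: "v1 \<in> carrier_vec n" unfolding v1_def using v by simp
  have "v1 \<bullet>c v1 = (\<Sum>k<n. (c * cnj c) * (v$k * cnj (v$k)))"
    unfolding cprod_sum[OF v1 v1] by (rule sum.cong, simp, insert v, simp add: v1_def)
  also have "\<dots> = (c * cnj c) * (v \<bullet>c v)" by (simp add: cprod_sum[OF v v] sum_distrib_left)
  also have "\<dots> = 1"
  proof -
    have sq: "sqrt r * sqrt r = r" using r(1) by simp
    have e: "(1 / sqrt r) * (1 / sqrt r) * r = 1" using r(1) sq by (simp add: field_simps)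
    have "(c * cnj c) * (v \<bullet>c v) = complex_of_real ((1 / sqrt r) * (1 / sqrt r) * r)"
      unfolding r(2) c_def by (simp only: complex_cnj_complex_of_real of_real_mult)
    then show ?thesis using e by simp
  qed
  finally have n1: "v1 \<bullet>c v1 = 1" .
  have "A *\<^sub>v v1 = a \<cdot>\<^sub>v v1" unfolding v1_def using mult_mat_vec[OF A v] Av
    by (simp add: smult_smult_assoc mult.commute)
  then show ?thesis using v1 n1 by blast
qed

lemma assoc5: assumes "A \<in> carrier_mat n n" "B \<in> carrier_mat n n" "C \<in> carrier_mat n n" "D \<in> carrier_mat n n" "E \<in> carrier_mat n n"
  shows "A * (B * C * D) * E = (A * B) * C * (D * E)"
proof -
  have BC: "B * C \<in> carrier_mat n n" using assms by (simp add: mult_carrier_mat)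
  have BCD: "B * C * D \<in> carrier_mat n n" using assms BC by (simp add: mult_carrier_mat)
  have AB: "A * B \<in> carrier_mat n n" using assms by (simp add: mult_carrier_mat)
  have DE: "D * E \<in> carrier_mat n n" using assms by (simp add: mult_carrier_mat)
  have "A * (B * C * D) * E = A * ((B * C * D) * E)" by (rule assoc_mult_mat[OF assms(1) BCD assms(5)])
  also have "(B * C * D) * E = B * C * (D * E)" by (rule assoc_mult_mat[OF BC assms(4) assms(5)])
  also have "A * (B * C * (D * E)) = A * B * C * (D * E)"
  proof -
    have "A * (B * C * (D * E)) = A * (B * C) * (D * E)" by (rule assoc_mult_mat[OF assms(1) BC DE, symmetric])
    also have "A * (B * C) = A * B * C" by (rule assoc_mult_mat[OF assms(1) assms(2) assms(3), symmetric])
    finally show ?thesis .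
  qed
  finally show ?thesis .
qed

lemma spectral:
  "herm n A \<Longrightarrow> \<exists>U d. unitary_mat n U \<and> A = U * mat_diag n (\<lambda>i. complex_of_real (d i)) * mat_adjoint U"
proof (induction n arbitrary: A)
  case 0
  have Ac: "A \<in> carrier_mat 0 0" using 0 unfolding herm_def by blast
  have u: "unitary_mat 0 (1\<^sub>m 0)" unfolding unitary_mat_def by simp
  have "A = 1\<^sub>m 0 * mat_diag 0 (\<lambda>i. complex_of_real 0) * mat_adjoint (1\<^sub>m 0)"
    by (rule eq_matI, insert Ac, simp_all)
  then show ?case by (intro exI[of _ "1\<^sub>m 0"] exI[of _ "\<lambda>i. 0::real"], insert u, simp)
next
  case (Suc m)
  define n where "n = Suc m"
  have hA: "herm n A" using Suc.prems unfolding n_def .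
  have Ac: "A \<in> carrier_mat n n" and Aadj: "mat_adjoint A = A" using hA unfolding herm_def by blast+
  obtain v1 a where v1: "v1 \<in> carrier_vec n" and n1: "v1 \<bullet>c v1 = 1" and Av: "A *\<^sub>v v1 = a \<cdot>\<^sub>v v1"
    using unit_eigvec[OF Ac] unfolding n_def by blast
  obtain W where uW: "unitary_mat n W" and W0: "\<forall>i<n. W $$ (i,0) = v1 $ i"
    using unit_complete[OF v1 n1] by blast
  note Wp = unitaryD[OF uW]
  have Wc: "W \<in> carrier_mat n n" by (rule Wp(1))
  have WHc: "mat_adjoint W \<in> carrier_mat n n" by (rule adj_carrier[OF Wc])
  define C where "C = mat_adjoint W * A * W"
  have Cc: "C \<in> carrier_mat n n" unfolding C_def using WHc Ac Wc by (simp add: mult_carrier_mat)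
  have Ce: "\<And>i j. i < n \<Longrightarrow> j < n \<Longrightarrow> C $$ (i,j) = (\<Sum>k<n. \<Sum>l<n. cnj (W $$ (k,i)) * A $$ (k,l) * W $$ (l,j))"
    unfolding C_def using Wc by (subst mult3_entry[OF WHc Ac Wc], simp_all)
  have hC: "herm n C"
  proof (rule herm_intro[OF Cc])
    fix i j assume ij: "i < n" "j < n"
    have "cnj (C $$ (i,j)) = (\<Sum>k<n. \<Sum>l<n. W $$ (k,i) * cnj (A $$ (k,l)) * cnj (W $$ (l,j)))"
      unfolding Ce[OF ij] by (simp add: cnj_sum)
    also have "\<dots> = (\<Sum>k<n. \<Sum>l<n. cnj (W $$ (l,j)) * A $$ (l,k) * W $$ (k,i))"
      by (rule sum.cong, simp, rule sum.cong, simp, subst herm_entry[OF hA], simp_all add: mult_ac)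
    also have "\<dots> = (\<Sum>l<n. \<Sum>k<n. cnj (W $$ (l,j)) * A $$ (l,k) * W $$ (k,i))"
      by (rule sum.swap)
    also have "\<dots> = C $$ (j,i)" unfolding Ce[OF ij(2) ij(1)] ..
    finally show "C $$ (j,i) = cnj (C $$ (i,j))" by simp
  qed
  have AW0: "\<And>l. l < n \<Longrightarrow> (A * W) $$ (l,0) = a * W $$ (l,0)"
  proof -
    fix l assume l: "l < n"
    have "(A * W) $$ (l,0) = (\<Sum>k<n. A $$ (l,k) * W $$ (k,0))" using mult_entry[OF Ac Wc l] by (simp add: n_def)
    also have "\<dots> = (\<Sum>k<n. A $$ (l,k) * v1 $ k)" using W0 by simp
    also have "\<dots> = (A *\<^sub>v v1) $ l" using mat_vec_entry[OF Ac v1 l] by simp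
    also have "\<dots> = a * W $$ (l,0)" using Av v1 l W0 by simp
    finally show "(A * W) $$ (l,0) = a * W $$ (l,0)" .
  qed
  have C0: "\<And>i. i < n \<Longrightarrow> C $$ (i,0) = (if i = 0 then a else 0)"
  proof -
    fix i assume i: "i < n"
    have n0: "0 < n" unfolding n_def by simp
    have "C = mat_adjoint W * (A * W)" unfolding C_def using WHc Ac Wc by (rule assoc_mult_mat)
    then have "C $$ (i,0) = (\<Sum>l<n. mat_adjoint W $$ (i,l) * (A * W) $$ (l,0))"
      using mult_entry[OF WHc mult_carrier_mat[OF Ac Wc] i n0] by simp
    also have "\<dots> = a * (\<Sum>l<n. mat_adjoint W $$ (i,l) * W $$ (l,0))"
      by (simp add: AW0 sum_distrib_left mult_ac)
    also have "\<dots> = a * (mat_adjoint W * W) $$ (i,0)" using mult_entry[OF WHc Wc i n0] by simp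
    also have "\<dots> = (if i = 0 then a else 0)" using Wp(2) i n0 by simp
    finally show "C $$ (i,0) = (if i = 0 then a else 0)" .
  qed
  have n0: "0 < n" unfolding n_def by simp
  have areal: "a = complex_of_real (Re a)"
  proof -
    have "C $$ (0,0) = cnj (C $$ (0,0))" using herm_entry[OF hC n0 n0] .
    then have "a = cnj a" using C0[OF n0] by simp
    then have "Im a = 0" by (metis cnj.sel(2) complex_cnj_zero_iff diff_self eq_iff_diff_eq_0 neg_equal_zero)
    then show ?thesis by (rule real_cplx)
  qed
  have Cr0: "\<And>j. j < n \<Longrightarrow> C $$ (0,j) = (if j = 0 then a else 0)"
  proof -
    fix j assume j: "j < n"
    have "C $$ (0,j) = cnj (C $$ (j,0))" using herm_entry[OF hC j n0] .
    show "C $$ (0,j) = (if j = 0 then a else 0)"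
    proof (cases "j = 0")
      case True then show ?thesis using C0[OF n0] by simp
    next
      case False then show ?thesis using C0[OF j] \<open>C $$ (0,j) = cnj (C $$ (j,0))\<close> by simp
    qed
  qed
  define A3 where "A3 = mat m m (\<lambda>(i,j). C $$ (Suc i, Suc j))"
  have hA3: "herm m A3"
  proof (rule herm_intro)
    show "A3 \<in> carrier_mat m m" unfolding A3_def by simp
    fix i j assume ij: "i < m" "j < m"
    have si: "Suc i < n" and sj: "Suc j < n" using ij unfolding n_def by simp_all
    have "C $$ (Suc j, Suc i) = cnj (C $$ (Suc i, Suc j))" by (rule herm_entry[OF hC si sj])
    then show "A3 $$ (j,i) = cnj (A3 $$ (i,j))" unfolding A3_def using ij by simp
  qed
  obtain U3 d3 where uU3: "unitary_mat m U3" and A3d: "A3 = U3 * mat_diag m (\<lambda>i. complex_of_real (d3 i)) * mat_adjoint U3"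
    using Suc.IH[OF hA3] by blast
  note U3p = unitaryD[OF uU3]
  define V where "V = mat n n (\<lambda>(i,j). if i = 0 then (if j = 0 then 1 else 0) else if j = 0 then 0 else U3 $$ (i-1, j-1))"
  define d where "d = (\<lambda>i. if i = 0 then Re a else d3 (i - 1))"
  have Vc: "V \<in> carrier_mat n n" unfolding V_def by simp
  have VHc: "mat_adjoint V \<in> carrier_mat n n" by (rule adj_carrier[OF Vc])
  have V00: "V $$ (0,0) = 1" unfolding V_def using n0 by simp
  have V0j: "\<And>j. j < m \<Longrightarrow> V $$ (0, Suc j) = 0" unfolding V_def n_def by simp
  have Vi0: "\<And>i. i < m \<Longrightarrow> V $$ (Suc i, 0) = 0" unfolding V_def n_def by simp
  have Vij: "\<And>i j. i < m \<Longrightarrow> j < m \<Longrightarrow> V $$ (Suc i, Suc j) = U3 $$ (i,j)" unfolding V_def n_def by simp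
  have VV: "mat_adjoint V * V = 1\<^sub>m n"
  proof (rule eq_matI)
    fix i j assume "i < dim_row (1\<^sub>m n :: complex mat)" "j < dim_col (1\<^sub>m n :: complex mat)"
    then have ij: "i < n" "j < n" by simp_all
    have "(mat_adjoint V * V) $$ (i,j) = (\<Sum>k<n. cnj (V $$ (k,i)) * V $$ (k,j))"
      using mult_entry[OF VHc Vc ij] Vc ij by simp
    also have "\<dots> = cnj (V $$ (0,i)) * V $$ (0,j) + (\<Sum>k<m. cnj (V $$ (Suc k,i)) * V $$ (Suc k,j))"
      unfolding n_def by (rule sum.lessThan_Suc_shift)
    also have "\<dots> = (1\<^sub>m n :: complex mat) $$ (i,j)"
    proof (cases i)
      case 0
      show ?thesis
      proof (cases j)
        case 0 then show ?thesis using \<open>i = 0\<close> V00 Vi0 n0 by simp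
      next
        case (Suc j') then show ?thesis using \<open>i = 0\<close> V00 Vi0 V0j ij unfolding n_def by simp
      qed
    next
      case (Suc i')
      show ?thesis
      proof (cases j)
        case 0 then show ?thesis using \<open>i = Suc i'\<close> V00 Vi0 V0j ij unfolding n_def by simp
      next
        case (Suc j')
        have i': "i' < m" and j': "j' < m" using ij \<open>i = Suc i'\<close> \<open>j = Suc j'\<close> unfolding n_def by simp_all
        have "(\<Sum>k<m. cnj (V $$ (Suc k,i)) * V $$ (Suc k,j)) = (\<Sum>k<m. cnj (U3 $$ (k,i')) * U3 $$ (k,j'))"
          using Vij i' j' \<open>i = Suc i'\<close> \<open>j = Suc j'\<close> by simp
        also have "\<dots> = (mat_adjoint U3 * U3) $$ (i',j')"
          using mult_entry[OF adj_carrier[OF U3p(1)] U3p(1) i' j'] U3p(1) i' j' by simp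
        also have "\<dots> = (if i' = j' then 1 else 0)" using U3p(2) i' j' by simp
        finally show ?thesis using V0j i' j' \<open>i = Suc i'\<close> \<open>j = Suc j'\<close> ij by simp
      qed
    qed
    finally show "(mat_adjoint V * V) $$ (i,j) = (1\<^sub>m n :: complex mat) $$ (i,j)" .
  qed (insert Vc, simp_all)
  have VV2: "V * mat_adjoint V = 1\<^sub>m n" by (rule mat_mult_left_right_inverse[OF VHc Vc VV])
  have CV: "C = V * mat_diag n (\<lambda>i. complex_of_real (d i)) * mat_adjoint V"
  proof (rule eq_matI)
    fix i j assume "i < dim_row (V * mat_diag n (\<lambda>i. complex_of_real (d i)) * mat_adjoint V)"
      "j < dim_col (V * mat_diag n (\<lambda>i. complex_of_real (d i)) * mat_adjoint V)"
    then have ij: "i < n" "j < n" using Vc by simp_all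
    have "(V * mat_diag n (\<lambda>i. complex_of_real (d i)) * mat_adjoint V) $$ (i,j)
       = (\<Sum>k<n. V $$ (i,k) * complex_of_real (d k) * cnj (V $$ (j,k)))" by (rule udu_entry[OF Vc ij])
    also have "\<dots> = V $$ (i,0) * complex_of_real (d 0) * cnj (V $$ (j,0)) +
        (\<Sum>k<m. V $$ (i,Suc k) * complex_of_real (d (Suc k)) * cnj (V $$ (j,Suc k)))"
      unfolding n_def by (rule sum.lessThan_Suc_shift)
    also have "\<dots> = C $$ (i,j)"
    proof (cases i)
      case 0
      show ?thesis
      proof (cases j)
        case 0 then show ?thesis using \<open>i = 0\<close> V00 V0j C0 n0 areal d_def by simp
      next
        case (Suc j') then show ?thesis using \<open>i = 0\<close> V00 Vi0 V0j Cr0 ij unfolding n_def by simp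
      qed
    next
      case (Suc i')
      show ?thesis
      proof (cases j)
        case 0 then show ?thesis using \<open>i = Suc i'\<close> V00 Vi0 V0j C0 ij unfolding n_def by simp
      next
        case (Suc j')
        have i': "i' < m" and j': "j' < m" using ij \<open>i = Suc i'\<close> \<open>j = Suc j'\<close> unfolding n_def by simp_all
        have "(\<Sum>k<m. V $$ (i,Suc k) * complex_of_real (d (Suc k)) * cnj (V $$ (j,Suc k)))
            = (\<Sum>k<m. U3 $$ (i',k) * complex_of_real (d3 k) * cnj (U3 $$ (j',k)))"
          using Vij i' j' \<open>i = Suc i'\<close> \<open>j = Suc j'\<close> d_def by simp
        also have "\<dots> = A3 $$ (i',j')" unfolding A3d by (rule udu_entry[OF U3p(1) i' j', symmetric])
        also have "\<dots> = C $$ (i,j)" unfolding A3_def using i' j' \<open>i = Suc i'\<close> \<open>j = Suc j'\<close> by simp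
        finally show ?thesis using Vi0 i' \<open>i = Suc i'\<close> by simp
      qed
    qed
    finally show "C $$ (i,j) = (V * mat_diag n (\<lambda>i. complex_of_real (d i)) * mat_adjoint V) $$ (i,j)" by simp
  qed (insert Vc Cc, simp_all)
  define U where "U = W * V"
  define D where "D = mat_diag n (\<lambda>i. complex_of_real (d i))"
  have Dc: "D \<in> carrier_mat n n" unfolding D_def by simp
  have Uc: "U \<in> carrier_mat n n" unfolding U_def using Wc Vc by (rule mult_carrier_mat)
  have UH0: "mat_adjoint (W * V) = mat_adjoint V * mat_adjoint W" by (rule adj_mult[OF Wc Vc])
  have UH: "mat_adjoint U = mat_adjoint V * mat_adjoint W" unfolding U_def by (rule UH0)
  have UU: "mat_adjoint U * U = 1\<^sub>m n"
  proof -
    have "mat_adjoint U * U = mat_adjoint V * (mat_adjoint W * W) * V"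
      unfolding U_def UH0 using VHc WHc Wc Vc by (simp add: assoc_mult_mat[of _ n n _ n _ n])
    also have "\<dots> = 1\<^sub>m n" using Wp(2) VV Vc VHc by simp
    finally show ?thesis .
  qed
  have UU2: "U * mat_adjoint U = 1\<^sub>m n" by (rule mat_mult_left_right_inverse[OF adj_carrier[OF Uc] Uc UU])
  have "A = (W * mat_adjoint W) * A * (W * mat_adjoint W)" using Wp(3) Ac by simp
  also have "\<dots> = W * C * mat_adjoint W"
    unfolding C_def using Wc WHc Ac by (simp add: assoc_mult_mat[of _ n n _ n _ n])
  also have "\<dots> = U * D * mat_adjoint U"
    unfolding CV U_def UH0 D_def by (rule assoc5[OF Wc Vc Dc[unfolded D_def] VHc WHc])
  finally have "A = U * D * mat_adjoint U" .
  moreover have "unitary_mat n U" unfolding unitary_mat_def using Uc UU UU2 by blast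
  ultimately show ?case unfolding D_def n_def by blast
qed



definition qfs :: "nat \<Rightarrow> complex mat \<Rightarrow> complex vec \<Rightarrow> complex" where
  "qfs n A v = (\<Sum>i<n. \<Sum>j<n. cnj (v$i) * A $$ (i,j) * v$j)"

lemma qf_sum: assumes "A \<in> carrier_mat n n" "v \<in> carrier_vec n"
  shows "conjugate v \<bullet> (A *\<^sub>v v) = qfs n A v"
proof -
  have "conjugate v \<bullet> (A *\<^sub>v v) = (\<Sum>i<n. cnj (v$i) * (A *\<^sub>v v) $ i)"
    using assms by (simp add: scalar_prod_def lessThan_atLeast0)
  also have "\<dots> = (\<Sum>i<n. cnj (v$i) * (\<Sum>j<n. A $$ (i,j) * v $ j))"
    by (rule sum.cong, simp, subst mat_vec_entry[OF assms], simp_all)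
  also have "\<dots> = qfs n A v" unfolding qfs_def by (simp add: sum_distrib_left mult.assoc)
  finally show ?thesis .
qed

lemma psd_ge: assumes "psd n A" "v \<in> carrier_vec n" shows "0 \<le> qfs n A v"
proof -
  have c: "A \<in> carrier_mat n n" using assms(1) unfolding psd_def by blast
  have "Im (conjugate v \<bullet> (A *\<^sub>v v)) = 0 \<and> Re (conjugate v \<bullet> (A *\<^sub>v v)) \<ge> 0"
    using assms unfolding psd_def by blast
  then show ?thesis unfolding qf_sum[OF c assms(2), symmetric] less_eq_complex_def by simp
qed

lemma psd_intro: assumes "A \<in> carrier_mat n n" "\<And>v. v \<in> carrier_vec n \<Longrightarrow> 0 \<le> qfs n A v"
  shows "psd n A"
  unfolding psd_def using assms qf_sum[OF assms(1)] unfolding less_eq_complex_def by simp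

lemma sum_delta_r: "(\<Sum>b<(n::nat). g b * (if b = i then 1 else 0)) = (if i < n then g i else (0::complex))"
proof -
  have "(\<Sum>b<n. g b * (if b = i then 1 else 0)) = (\<Sum>b<n. if b = i then g b else 0)"
    by (rule sum.cong, simp, simp)
  also have "\<dots> = (if i < n then g i else 0)" by (simp add: sum.delta)
  finally show ?thesis .
qed

lemma sum_delta_l: "(\<Sum>b<(n::nat). (if b = i then 1 else 0) * g b) = (if i < n then g i else (0::complex))"
  using sum_delta_r[of g i n] by (simp add: mult.commute)

lemma sum_two: assumes "i < (n::nat)" "j < n" "i \<noteq> j"
  shows "(\<Sum>b<n. f b * (if b = i then 1 else if b = j then c else 0)) = f i + f j * (c::complex)"
proof -
  have "(\<Sum>b<n. f b * (if b = i then 1 else if b = j then c else 0)) =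
        (\<Sum>b<n. (if b = i then f b else 0) + (if b = j then f b * c else 0))"
    by (rule sum.cong, simp, insert assms, auto)
  also have "\<dots> = f i + f j * c" using assms by (simp add: sum.distrib sum.delta)
  finally show ?thesis .
qed

lemma psd_herm: assumes "psd n A" shows "herm n A"
proof -
  have c: "A \<in> carrier_mat n n" using assms unfolding psd_def by blast
  define vv where "vv = (\<lambda>i j c. vec n (\<lambda>k. if k = i then 1 else if k = j then c else (0::complex)))"
  have vvc: "\<And>i j c. vv i j c \<in> carrier_vec n" unfolding vv_def by simp
  have Qv: "\<And>i j c. i < n \<Longrightarrow> j < n \<Longrightarrow> i \<noteq> j \<Longrightarrow> qfs n A (vv i j c) =
      A $$ (i,i) + A $$ (i,j) * c + cnj c * (A $$ (j,i) + A $$ (j,j) * c)"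
  proof -
    fix i j c assume ij: "i < n" "j < n" "i \<noteq> j"
    have "qfs n A (vv i j c) = (\<Sum>a<n. (if a = i then 1 else if a = j then cnj c else 0) * (A $$ (a,i) + A $$ (a,j) * c))"
      unfolding qfs_def
    proof (rule sum.cong, simp)
      fix a assume a: "a \<in> {..<n}"
      have "(\<Sum>b<n. cnj (vv i j c $ a) * A $$ (a, b) * vv i j c $ b) =
            cnj (vv i j c $ a) * (\<Sum>b<n. A $$ (a, b) * (if b = i then 1 else if b = j then c else 0))"
        unfolding sum_distrib_left by (rule sum.cong, simp, simp add: vv_def mult.assoc)
      also have "\<dots> = cnj (vv i j c $ a) * (A $$ (a,i) + A $$ (a,j) * c)" by (simp add: sum_two[OF ij])
      also have "\<dots> = (if a = i then 1 else if a = j then cnj c else 0) * (A $$ (a,i) + A $$ (a,j) * c)"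
        using a by (simp add: vv_def)
      finally show "(\<Sum>b<n. cnj (vv i j c $ a) * A $$ (a, b) * vv i j c $ b) = (if a = i then 1 else if a = j then cnj c else 0) * (A $$ (a,i) + A $$ (a,j) * c)" .
    qed
    also have "\<dots> = (\<Sum>a<n. (A $$ (a,i) + A $$ (a,j) * c) * (if a = i then 1 else if a = j then cnj c else 0))"
      by (simp add: mult.commute)
    also have "\<dots> = (A $$ (i,i) + A $$ (i,j) * c) + (A $$ (j,i) + A $$ (j,j) * c) * cnj c"
      by (rule sum_two[OF ij])
    finally show "qfs n A (vv i j c) = A $$ (i,i) + A $$ (i,j) * c + cnj c * (A $$ (j,i) + A $$ (j,j) * c)"
      by (simp add: mult.commute)
  qed
  have diag: "\<And>i. i < n \<Longrightarrow> Im (A $$ (i,i)) = 0"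
  proof -
    fix i assume i: "i < n"
    define e where "e = vec n (\<lambda>k. if k = i then 1 else (0::complex))"
    have ec: "e \<in> carrier_vec n" unfolding e_def by simp
    have "qfs n A e = (\<Sum>a<n. (if a = i then 1 else 0) * (\<Sum>b<n. A $$ (a,b) * (if b = i then 1 else 0)))"
      unfolding qfs_def sum_distrib_left by (rule sum.cong, simp, rule sum.cong, simp, simp add: e_def)
    also have "\<dots> = A $$ (i,i)" using i by (simp add: sum_delta_r sum_delta_l)
    finally have "qfs n A e = A $$ (i,i)" .
    then show "Im (A $$ (i,i)) = 0" using psd_ge[OF assms ec] unfolding less_eq_complex_def by simp
  qed
  show ?thesis
  proof (rule herm_intro[OF c])
    fix i j assume ij: "i < n" "j < n"
    show "A $$ (j,i) = cnj (A $$ (i,j))"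
    proof (cases "i = j")
      case True
      then show ?thesis using diag[OF ij(1)] by (simp add: complex_eq_iff)
    next
      case False
      have q1: "Im (qfs n A (vv i j 1)) = 0" using psd_ge[OF assms vvc] unfolding less_eq_complex_def by simp
      have q2: "Im (qfs n A (vv i j \<i>)) = 0" using psd_ge[OF assms vvc] unfolding less_eq_complex_def by simp
      have e1: "Im (A $$ (i,j)) + Im (A $$ (j,i)) = 0"
        using q1 Qv[OF ij False, of 1] diag[OF ij(1)] diag[OF ij(2)] by simp
      have e2: "Re (A $$ (i,j)) - Re (A $$ (j,i)) = 0"
        using q2 Qv[OF ij False, of \<i>] diag[OF ij(1)] diag[OF ij(2)] by (simp add: algebra_simps)
      show ?thesis using e1 e2 by (simp add: complex_eq_iff)
    qed
  qed
qed



lemma unitary_conj_diag: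
  assumes u: "unitary_mat n U" and A: "A = U * Dg * mat_adjoint U" and Dc: "Dg \<in> carrier_mat n n"
  shows "mat_adjoint U * A * U = Dg"
proof -
  note Up = unitaryD[OF u]
  have UHc: "mat_adjoint U \<in> carrier_mat n n" by (rule adj_carrier[OF Up(1)])
  have "mat_adjoint U * A * U = (mat_adjoint U * U) * Dg * (mat_adjoint U * U)"
    unfolding A using UHc Up(1) Dc by (simp add: assoc_mult_mat[of _ n n _ n _ n])
  also have "\<dots> = Dg" using Up(2) Dc by simp
  finally show ?thesis .
qed

lemma psd_diag_nonneg:
  assumes p: "psd n A" and u: "unitary_mat n U" and A: "A = U * mat_diag n (\<lambda>i. complex_of_real (d i)) * mat_adjoint U"
    and k: "k < n"
  shows "d k \<ge> 0"
proof -
  note Up = unitaryD[OF u]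
  have Ac: "A \<in> carrier_mat n n" using p unfolding psd_def by blast
  have UHc: "mat_adjoint U \<in> carrier_mat n n" by (rule adj_carrier[OF Up(1)])
  have e: "mat_adjoint U * A * U = mat_diag n (\<lambda>i. complex_of_real (d i))"
    by (rule unitary_conj_diag[OF u A], simp)
  have "complex_of_real (d k) = (mat_adjoint U * A * U) $$ (k,k)" unfolding e using k by (simp add: mat_diag_def)
  also have "\<dots> = (\<Sum>i<n. \<Sum>j<n. mat_adjoint U $$ (k,i) * A $$ (i,j) * U $$ (j,k))"
    by (rule mult3_entry[OF UHc Ac Up(1) k k])
  also have "\<dots> = qfs n A (col U k)" unfolding qfs_def using Up(1) k by simp
  finally have "complex_of_real (d k) = qfs n A (col U k)" .
  moreover have cc: "col U k \<in> carrier_vec n" using Up(1) unfolding carrier_mat_def carrier_vec_def by simp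
  moreover have "0 \<le> qfs n A (col U k)" by (rule psd_ge[OF p cc])
  ultimately have "0 \<le> complex_of_real (d k)" by simp
  then show ?thesis by (simp add: less_eq_complex_def)
qed

lemma psd_decomp:
  assumes p: "psd n A"
  shows "\<exists>U d. unitary_mat n U \<and> A = U * mat_diag n (\<lambda>i. complex_of_real (d i)) * mat_adjoint U"
  using spectral[OF psd_herm[OF p]] .

lemma psd_null:
  assumes p: "psd n A" and w: "w \<in> carrier_vec n" and q: "qfs n A w = 0" and i: "i < n"
  shows "(\<Sum>j<n. A $$ (i,j) * w $ j) = 0"
proof -
  obtain U d where u: "unitary_mat n U" and A: "A = U * mat_diag n (\<lambda>i. complex_of_real (d i)) * mat_adjoint U"
    using psd_decomp[OF p] by blast
  note Up = unitaryD[OF u]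
  have dn: "\<And>k. k < n \<Longrightarrow> d k \<ge> 0" using psd_diag_nonneg[OF p u A] .
  have Ae: "\<And>i j. i < n \<Longrightarrow> j < n \<Longrightarrow> A $$ (i,j) = (\<Sum>k<n. U $$ (i,k) * complex_of_real (d k) * cnj (U $$ (j,k)))"
    unfolding A by (rule udu_entry[OF Up(1)])
  define z where "z = (\<lambda>k. \<Sum>j<n. cnj (U $$ (j,k)) * w $ j)"
  have "qfs n A w = (\<Sum>i<n. \<Sum>j<n. \<Sum>k<n. cnj (w$i) * U $$ (i,k) * complex_of_real (d k) * cnj (U $$ (j,k)) * w$j)"
    unfolding qfs_def
    by (rule sum.cong, simp, rule sum.cong, simp, simp add: Ae sum_distrib_left sum_distrib_right mult.assoc)
  also have "\<dots> = (\<Sum>i<n. \<Sum>k<n. \<Sum>j<n. cnj (w$i) * U $$ (i,k) * complex_of_real (d k) * cnj (U $$ (j,k)) * w$j)"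
    by (rule sum.cong, simp, rule sum.swap)
  also have "\<dots> = (\<Sum>k<n. \<Sum>i<n. \<Sum>j<n. cnj (w$i) * U $$ (i,k) * complex_of_real (d k) * cnj (U $$ (j,k)) * w$j)"
    by (rule sum.swap)
  also have "\<dots> = (\<Sum>k<n. complex_of_real (d k) * (cnj (z k) * z k))"
  proof (rule sum.cong, simp)
    fix k assume "k \<in> {..<n}"
    have cz: "cnj (z k) = (\<Sum>i<n. cnj (w$i) * U $$ (i,k))" unfolding z_def by (simp add: mult.commute)
    have "cnj (z k) * z k = (\<Sum>i<n. \<Sum>j<n. (cnj (w$i) * U $$ (i,k)) * (cnj (U $$ (j,k)) * w $ j))"
      unfolding cz by (simp add: z_def sum_product)
    then show "(\<Sum>i<n. \<Sum>j<n. cnj (w$i) * U $$ (i,k) * complex_of_real (d k) * cnj (U $$ (j,k)) * w$j) =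
          complex_of_real (d k) * (cnj (z k) * z k)"
      by (simp add: sum_distrib_left mult_ac)
  qed
  finally have qs: "(\<Sum>k<n. complex_of_real (d k) * (cnj (z k) * z k)) = 0" using q by simp
  have nn: "\<And>k. k \<in> {..<n} \<Longrightarrow> 0 \<le> complex_of_real (d k) * (cnj (z k) * z k)"
  proof -
    fix k assume "k \<in> {..<n}"
    then have "d k \<ge> 0" using dn by simp
    moreover have "cnj (z k) * z k = complex_of_real ((cmod (z k))^2)"
      by (metis complex_norm_square mult.commute of_real_power)
    ultimately show "0 \<le> complex_of_real (d k) * (cnj (z k) * z k)" by (simp add: less_eq_complex_def)
  qed
  have z0: "\<And>k. k < n \<Longrightarrow> complex_of_real (d k) * z k = 0"
  proof -
    fix k assume k: "k < n"
    have "complex_of_real (d k) * (cnj (z k) * z k) = 0" using qs sum_nonneg_eq_0_iff[OF finite_lessThan nn] k by simp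
    then show "complex_of_real (d k) * z k = 0" by auto
  qed
  have "(\<Sum>j<n. A $$ (i,j) * w $ j) = (\<Sum>j<n. \<Sum>k<n. U $$ (i,k) * complex_of_real (d k) * cnj (U $$ (j,k)) * w $ j)"
    by (rule sum.cong, simp, simp add: Ae i sum_distrib_right)
  also have "\<dots> = (\<Sum>k<n. \<Sum>j<n. U $$ (i,k) * complex_of_real (d k) * cnj (U $$ (j,k)) * w $ j)"
    by (rule sum.swap)
  also have "\<dots> = (\<Sum>k<n. U $$ (i,k) * (complex_of_real (d k) * z k))"
    unfolding z_def sum_distrib_left by (rule sum.cong, simp, rule sum.cong, simp, simp add: mult_ac)
  also have "\<dots> = 0" using z0 by (intro sum.neutral) simp
  finally show ?thesis .
qed

lemma psd_null_row:
  assumes p: "psd n A" and w: "w \<in> carrier_vec n" and q: "qfs n A w = 0" and j: "j < n"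
  shows "(\<Sum>i<n. cnj (w $ i) * A $$ (i,j)) = 0"
proof -
  have h: "herm n A" by (rule psd_herm[OF p])
  have "(\<Sum>i<n. cnj (w $ i) * A $$ (i,j)) = cnj (\<Sum>i<n. A $$ (j,i) * w $ i)"
    by (simp add: cnj_sum, rule sum.cong, simp, simp add: herm_entry[OF h j] mult.commute)
  also have "\<dots> = 0" using psd_null[OF p w q j] by simp
  finally show ?thesis .
qed



definition tvec :: "nat \<Rightarrow> nat \<Rightarrow> complex vec \<Rightarrow> nat \<Rightarrow> complex vec" where
  "tvec n m u p = vec (n*m) (\<lambda>x. if x mod m = p then u $ (x div m) else 0)"

lemma tvec_carrier: "tvec n m u p \<in> carrier_vec (n*m)" unfolding tvec_def by simp

lemma tvec_idx: "x < n*m \<Longrightarrow> tvec n m u p $ x = (if x mod m = p then u $ (x div m) else 0)"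
  unfolding tvec_def by simp

lemma sum_sparse:
  assumes p: "p < (m::nat)"
  shows "(\<Sum>x<n*m. (if x mod m = p then 1 else 0) * g x) = (\<Sum>a<n. g (a*m+p) :: complex)"
proof -
  have "(\<Sum>x<n*m. (if x mod m = p then 1 else 0) * g x) = (\<Sum>a<n. \<Sum>k<m. (if (a*m+k) mod m = p then 1 else 0) * g (a*m+k))"
    by (rule sum_split_mult)
  also have "\<dots> = (\<Sum>a<n. \<Sum>k<m. (if k = p then 1 else 0) * g (a*m+k))"
    by (rule sum.cong, simp, rule sum.cong, simp, simp)
  also have "\<dots> = (\<Sum>a<n. g (a*m+p))" using p by (simp add: sum_delta_l)
  finally show ?thesis .
qed

lemma sum_sparse_r:
  assumes p: "p < (m::nat)"
  shows "(\<Sum>x<n*m. g x * (if x mod m = p then 1 else 0)) = (\<Sum>a<n. g (a*m+p) :: complex)"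
  using sum_sparse[OF p, where n=n and g=g] by (simp add: mult.commute)

lemma idx_decomp: "(x::nat) = (x div m) * m + x mod m" by simp

lemma qfs_tvec:
  assumes X: "X \<in> carrier_mat (n*m) (n*m)" and u: "u \<in> carrier_vec n" and p: "p < m"
  shows "qfs (n*m) X (tvec n m u p) = (\<Sum>a<n. \<Sum>b<n. cnj (u$a) * X $$ (a*m+p, b*m+p) * u$b)"
proof -
  let ?t = "tvec n m u p"
  have "qfs (n*m) X ?t = (\<Sum>x<n*m. (if x mod m = p then 1 else 0) *
           (\<Sum>b<n. cnj (u $ (x div m)) * X $$ (x, b*m+p) * u $ b))"
    unfolding qfs_def
  proof (rule sum.cong, simp)
    fix x assume x: "x \<in> {..<n*m}"
    have "(\<Sum>y<n*m. cnj (?t $ x) * X $$ (x, y) * ?t $ y) =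
          (\<Sum>y<n*m. (cnj (?t $ x) * X $$ (x, y) * u $ (y div m)) * (if y mod m = p then 1 else 0))"
      by (rule sum.cong, simp, simp add: tvec_idx)
    also have "\<dots> = (\<Sum>b<n. cnj (?t $ x) * X $$ (x, b*m+p) * u $ b)"
      using p by (subst sum_sparse_r[OF p], simp)
    also have "\<dots> = (if x mod m = p then 1 else 0) * (\<Sum>b<n. cnj (u $ (x div m)) * X $$ (x, b*m+p) * u $ b)"
      using x by (simp add: tvec_idx)
    finally show "(\<Sum>y<n*m. cnj (?t $ x) * X $$ (x, y) * ?t $ y) =
      (if x mod m = p then 1 else 0) * (\<Sum>b<n. cnj (u $ (x div m)) * X $$ (x, b*m+p) * u $ b)" .
  qed
  also have "\<dots> = (\<Sum>a<n. \<Sum>b<n. cnj (u$a) * X $$ (a*m+p, b*m+p) * u$b)"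
    using p by (subst sum_sparse[OF p], simp)
  finally show ?thesis .
qed

lemma ptrace_entry: "i < n \<Longrightarrow> j < n \<Longrightarrow> ptrace_right n m X $$ (i,j) = (\<Sum>k<m. X $$ (i*m+k, j*m+k))"
  unfolding ptrace_right_def by simp

lemma ptrace_carrier: "ptrace_right n m X \<in> carrier_mat n n"
  unfolding ptrace_right_def by simp

lemma ptrace_qf:
  assumes X: "X \<in> carrier_mat (n*m) (n*m)" and u: "u \<in> carrier_vec n"
  shows "qfs n (ptrace_right n m X) u = (\<Sum>p<m. qfs (n*m) X (tvec n m u p))"
proof -
  have "qfs n (ptrace_right n m X) u = (\<Sum>a<n. \<Sum>b<n. \<Sum>p<m. cnj (u$a) * X $$ (a*m+p, b*m+p) * u$b)"
    unfolding qfs_def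
    by (rule sum.cong, simp, rule sum.cong, simp, simp add: ptrace_entry sum_distrib_left sum_distrib_right)
  also have "\<dots> = (\<Sum>a<n. \<Sum>p<m. \<Sum>b<n. cnj (u$a) * X $$ (a*m+p, b*m+p) * u$b)"
    by (rule sum.cong, simp, rule sum.swap)
  also have "\<dots> = (\<Sum>p<m. \<Sum>a<n. \<Sum>b<n. cnj (u$a) * X $$ (a*m+p, b*m+p) * u$b)"
    by (rule sum.swap)
  also have "\<dots> = (\<Sum>p<m. qfs (n*m) X (tvec n m u p))"
    by (rule sum.cong, simp, simp add: qfs_tvec[OF X u])
  finally show ?thesis .
qed

lemma ptrace_psd:
  assumes X: "psd (n*m) X" shows "psd n (ptrace_right n m X)"
proof (rule psd_intro[OF ptrace_carrier])
  fix u :: "complex vec" assume u: "u \<in> carrier_vec n"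
  have Xc: "X \<in> carrier_mat (n*m) (n*m)" using X unfolding psd_def by blast
  show "0 \<le> qfs n (ptrace_right n m X) u" unfolding ptrace_qf[OF Xc u]
    by (rule sum_nonneg, rule psd_ge[OF X tvec_carrier])
qed



lemma tens_carrier: "K \<in> carrier_mat n n \<Longrightarrow> tensor_mat K (1\<^sub>m d) \<in> carrier_mat (n*d) (n*d)"
  unfolding tensor_mat_def carrier_mat_def by simp

lemma tens_entry:
  assumes K: "K \<in> carrier_mat n n" and i: "i < n*d" and j: "j < n*d"
  shows "tensor_mat K (1\<^sub>m d) $$ (i,j) = (if i mod d = j mod d then 1 else 0) * K $$ (i div d, j div d)"
proof -
  have d: "i mod d < d" "j mod d < d" using divmod_lt[OF i] divmod_lt[OF j] by simp_all
  show ?thesis unfolding tensor_mat_def using K i j d by (simp add: mult.commute)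
qed

lemma idx_eq: assumes "p < (d::nat)" "q < d" shows "(c*d+p = e*d+q) \<longleftrightarrow> (c = e \<and> p = q)"
proof
  assume h: "c*d+p = e*d+q"
  have "(c*d+p) div d = (e*d+q) div d" "(c*d+p) mod d = (e*d+q) mod d" using h by simp_all
  then show "c = e \<and> p = q" using assms by simp
qed simp

lemma conj_tensor_entry:
  assumes K: "K \<in> carrier_mat n n" and L: "L \<in> carrier_mat n n" and Z: "Z \<in> carrier_mat (n*d) (n*d)"
    and a: "a < n" and b: "b < n" and p: "p < d" and q: "q < d"
  shows "(tensor_mat K (1\<^sub>m d) * Z * tensor_mat L (1\<^sub>m d)) $$ (a*d+p, b*d+q) =
         (\<Sum>c<n. \<Sum>e<n. K $$ (a,c) * Z $$ (c*d+p, e*d+q) * L $$ (e,b))"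
proof -
  have i: "a*d+p < n*d" by (rule idx_lt[OF a p])
  have j: "b*d+q < n*d" by (rule idx_lt[OF b q])
  have inner: "\<And>x. (\<Sum>y<n*d. Z $$ (x,y) * tensor_mat L (1\<^sub>m d) $$ (y, b*d+q)) = (\<Sum>e<n. Z $$ (x, e*d+q) * L $$ (e,b))"
  proof -
    fix x
    have "(\<Sum>y<n*d. Z $$ (x,y) * tensor_mat L (1\<^sub>m d) $$ (y, b*d+q)) =
          (\<Sum>y<n*d. (Z $$ (x,y) * L $$ (y div d, b)) * (if y mod d = q then 1 else 0))"
      by (rule sum.cong, simp, simp add: tens_entry[OF L _ j] q)
    also have "\<dots> = (\<Sum>e<n. Z $$ (x, e*d+q) * L $$ (e,b))" using q by (subst sum_sparse_r[OF q], simp)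
    finally show "(\<Sum>y<n*d. Z $$ (x,y) * tensor_mat L (1\<^sub>m d) $$ (y, b*d+q)) = (\<Sum>e<n. Z $$ (x, e*d+q) * L $$ (e,b))" .
  qed
  have "(tensor_mat K (1\<^sub>m d) * Z * tensor_mat L (1\<^sub>m d)) $$ (a*d+p, b*d+q) =
     (\<Sum>x<n*d. \<Sum>y<n*d. tensor_mat K (1\<^sub>m d) $$ (a*d+p, x) * Z $$ (x,y) * tensor_mat L (1\<^sub>m d) $$ (y, b*d+q))"
    by (rule mult3_entry[OF tens_carrier[OF K] Z tens_carrier[OF L] i j])
  also have "\<dots> = (\<Sum>x<n*d. (if x mod d = p then 1 else 0) * (K $$ (a, x div d) * (\<Sum>y<n*d. Z $$ (x,y) * tensor_mat L (1\<^sub>m d) $$ (y, b*d+q))))"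
    by (rule sum.cong, simp, simp add: tens_entry[OF K i] p sum_distrib_left mult.assoc)
  also have "\<dots> = (\<Sum>c<n. K $$ (a, c) * (\<Sum>e<n. Z $$ (c*d+p, e*d+q) * L $$ (e,b)))"
    using p by (subst sum_sparse[OF p], simp add: inner)
  also have "\<dots> = (\<Sum>c<n. \<Sum>e<n. K $$ (a,c) * Z $$ (c*d+p, e*d+q) * L $$ (e,b))"
    by (simp add: sum_distrib_left mult.assoc)
  finally show ?thesis .
qed

lemma eq_mat_blocks:
  assumes A: "A \<in> carrier_mat (n*d) (n*d)" and B: "B \<in> carrier_mat (n*d) (n*d)"
    and e: "\<And>a b p q. a < n \<Longrightarrow> b < n \<Longrightarrow> p < d \<Longrightarrow> q < d \<Longrightarrow> A $$ (a*d+p, b*d+q) = B $$ (a*d+p, b*d+q)"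
  shows "A = B"
proof (rule eq_matI)
  fix i j assume "i < dim_row B" "j < dim_col B"
  then have i: "i < n*d" and j: "j < n*d" using B by simp_all
  have "A $$ ((i div d)*d + i mod d, (j div d)*d + j mod d) = B $$ ((i div d)*d + i mod d, (j div d)*d + j mod d)"
    by (rule e, insert divmod_lt[OF i] divmod_lt[OF j], simp_all)
  then show "A $$ (i,j) = B $$ (i,j)" by simp
qed (insert A B, simp_all)

lemma tensor_mult:
  assumes A: "A \<in> carrier_mat n n" and B: "B \<in> carrier_mat n n"
  shows "tensor_mat A (1\<^sub>m d) * tensor_mat B (1\<^sub>m d) = tensor_mat (A * B) (1\<^sub>m d)"
proof -
  have AB: "A * B \<in> carrier_mat n n" using A B by (rule mult_carrier_mat)
  have I: "1\<^sub>m (n*d) \<in> carrier_mat (n*d) (n*d)" by simp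
  have "tensor_mat A (1\<^sub>m d) * tensor_mat B (1\<^sub>m d) = tensor_mat A (1\<^sub>m d) * 1\<^sub>m (n*d) * tensor_mat B (1\<^sub>m d)"
    using tens_carrier[OF A, of d] by simp
  also have "\<dots> = tensor_mat (A * B) (1\<^sub>m d)"
  proof (rule eq_mat_blocks[of _ n d])
    show "tensor_mat A (1\<^sub>m d) * 1\<^sub>m (n * d) * tensor_mat B (1\<^sub>m d) \<in> carrier_mat (n * d) (n * d)"
      using tens_carrier[OF A, of d] tens_carrier[OF B, of d] by (simp add: mult_carrier_mat)
    show "tensor_mat (A * B) (1\<^sub>m d) \<in> carrier_mat (n * d) (n * d)" by (rule tens_carrier[OF AB])
    fix a b p q assume abpq: "a < n" "b < n" "p < d" "q < d"
    have "(tensor_mat A (1\<^sub>m d) * 1\<^sub>m (n * d) * tensor_mat B (1\<^sub>m d)) $$ (a*d+p, b*d+q)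
       = (\<Sum>c<n. \<Sum>e<n. A $$ (a,c) * (1\<^sub>m (n * d)) $$ (c*d+p, e*d+q) * B $$ (e,b))"
      by (rule conj_tensor_entry[OF A B I abpq])
    also have "\<dots> = (\<Sum>c<n. \<Sum>e<n. (if p = q then 1 else 0) * (A $$ (a,c) * ((if e = c then 1 else 0) * B $$ (e,b))))"
    proof (rule sum.cong, simp, rule sum.cong, simp)
      fix c e assume "c \<in> {..<n}" "e \<in> {..<n}"
      then have ce: "c < n" "e < n" by simp_all
      have l1: "c*d+p < n*d" "e*d+q < n*d" using idx_lt ce abpq by simp_all
      show "A $$ (a,c) * (1\<^sub>m (n * d)) $$ (c*d+p, e*d+q) * B $$ (e,b) =
            (if p = q then 1 else 0) * (A $$ (a,c) * ((if e = c then 1 else 0) * B $$ (e,b)))"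
        using l1 idx_eq[OF abpq(3,4), of c e] by (cases "p = q"; cases "c = e"; simp)
    qed
    also have "\<dots> = (if p = q then 1 else 0) * (\<Sum>c<n. A $$ (a,c) * B $$ (c,b))"
      by (simp add: sum_distrib_left[symmetric] sum_delta_l)
    also have "\<dots> = tensor_mat (A * B) (1\<^sub>m d) $$ (a*d+p, b*d+q)"
      using tens_entry[OF AB idx_lt[OF abpq(1,3)] idx_lt[OF abpq(2,4)]] abpq mult_entry[OF A B abpq(1,2)] by simp
    finally show "(tensor_mat A (1\<^sub>m d) * 1\<^sub>m (n * d) * tensor_mat B (1\<^sub>m d)) $$ (a*d+p, b*d+q) = tensor_mat (A * B) (1\<^sub>m d) $$ (a*d+p, b*d+q)" .
  qed
  finally show ?thesis .
qed

lemma adj_tensor: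
  assumes K: "K \<in> carrier_mat n n"
  shows "mat_adjoint (tensor_mat K (1\<^sub>m d)) = tensor_mat (mat_adjoint K) (1\<^sub>m d)"
proof (rule eq_matI)
  have KH: "mat_adjoint K \<in> carrier_mat n n" by (rule adj_carrier[OF K])
  fix i j assume "i < dim_row (tensor_mat (mat_adjoint K) (1\<^sub>m d))" "j < dim_col (tensor_mat (mat_adjoint K) (1\<^sub>m d))"
  then have i: "i < n*d" and j: "j < n*d" using tens_carrier[OF KH, of d] by simp_all
  have "mat_adjoint (tensor_mat K (1\<^sub>m d)) $$ (i,j) = cnj (tensor_mat K (1\<^sub>m d) $$ (j,i))"
    using tens_carrier[OF K, of d] i j by simp
  also have "\<dots> = tensor_mat (mat_adjoint K) (1\<^sub>m d) $$ (i,j)"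
    unfolding tens_entry[OF K j i] tens_entry[OF KH i j] using K divmod_lt[OF i] divmod_lt[OF j] by simp
  finally show "mat_adjoint (tensor_mat K (1\<^sub>m d)) $$ (i,j) = tensor_mat (mat_adjoint K) (1\<^sub>m d) $$ (i,j)" .
next
  show "dim_row (mat_adjoint (tensor_mat K (1\<^sub>m d))) = dim_row (tensor_mat (mat_adjoint K) (1\<^sub>m d))"
    using K by (simp add: tensor_mat_def)
  show "dim_col (mat_adjoint (tensor_mat K (1\<^sub>m d))) = dim_col (tensor_mat (mat_adjoint K) (1\<^sub>m d))"
    using K by (simp add: tensor_mat_def)
qed



definition Eu :: "nat \<Rightarrow> nat \<Rightarrow> nat \<Rightarrow> complex mat" where
  "Eu d k l = mat d d (\<lambda>(i,j). if i = k \<and> j = l then 1 else 0)"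

definition blk :: "nat \<Rightarrow> complex mat \<Rightarrow> nat \<Rightarrow> nat \<Rightarrow> complex mat" where
  "blk dI X a b = mat dI dI (\<lambda>(k,l). X $$ (a*dI + k, b*dI + l))"

lemma chanD:
  assumes "quantum_channel dI dO M"
  shows "\<And>X. X \<in> carrier_mat dI dI \<Longrightarrow> M X \<in> carrier_mat dO dO"
    and "\<And>X Y. X \<in> carrier_mat dI dI \<Longrightarrow> Y \<in> carrier_mat dI dI \<Longrightarrow> M (X + Y) = M X + M Y"
    and "\<And>X c. X \<in> carrier_mat dI dI \<Longrightarrow> M (c \<cdot>\<^sub>m X) = c \<cdot>\<^sub>m M X"
    and "\<And>X. X \<in> carrier_mat dI dI \<Longrightarrow> mtrace (M X) = mtrace X"
    and "\<And>n X. psd (n*dI) X \<Longrightarrow> psd (n*dO) (ext_chan n dI dO M X)"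
  using assms unfolding quantum_channel_def by blast+

lemma chan_lin:
  assumes ch: "quantum_channel dI dO M" and X: "X \<in> carrier_mat dI dI" and p: "p < dO" and q: "q < dO"
  shows "M X $$ (p,q) = (\<Sum>k<dI. \<Sum>l<dI. X $$ (k,l) * M (Eu dI k l) $$ (p,q))"
proof -
  note c = chanD[OF ch]
  define Xs where "Xs = (\<lambda>S. mat dI dI (\<lambda>(i,j). if (i,j) \<in> S then X $$ (i,j) else 0))"
  have Xsc: "\<And>S. Xs S \<in> carrier_mat dI dI" unfolding Xs_def by simp
  have Euc: "\<And>k l. Eu dI k l \<in> carrier_mat dI dI" unfolding Eu_def by simp
  have main: "finite S \<Longrightarrow> M (Xs S) $$ (p,q) = (\<Sum>x\<in>S. X $$ x * M (Eu dI (fst x) (snd x)) $$ (p,q))" for S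
  proof (induction S rule: finite_induct)
    case empty
    have z: "Xs {} = 0 \<cdot>\<^sub>m Xs {}" by (rule eq_matI, simp_all add: Xs_def)
    have e1: "M (Xs {}) = 0 \<cdot>\<^sub>m M (Xs {})" by (subst z, rule c(3)[OF Xsc])
    have m0: "M (Xs {}) \<in> carrier_mat dO dO" by (rule c(1)[OF Xsc])
    have "(0 \<cdot>\<^sub>m M (Xs {})) $$ (p,q) = 0 * M (Xs {}) $$ (p,q)" using m0 p q by (subst index_smult_mat, simp_all)
    then have "M (Xs {}) $$ (p,q) = 0" using e1 by simp
    then show ?case by simp
  next
    case (insert x F)
    obtain k l where x: "x = (k,l)" by (cases x)
    have e: "Xs (insert x F) = Xs F + (X $$ (k,l)) \<cdot>\<^sub>m Eu dI k l"
      by (rule eq_matI, insert insert.hyps(2) x, auto simp: Xs_def Eu_def)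
    have "M (Xs (insert x F)) = M (Xs F) + (X $$ (k,l)) \<cdot>\<^sub>m M (Eu dI k l)"
      unfolding e by (subst c(2)[OF Xsc smult_carrier_mat[OF Euc]], subst c(3)[OF Euc], rule refl)
    then have "M (Xs (insert x F)) $$ (p,q) = M (Xs F) $$ (p,q) + X $$ (k,l) * M (Eu dI k l) $$ (p,q)"
      using c(1)[OF Xsc[of F]] c(1)[OF Euc[of k l]] p q by simp
    then show ?case using insert.IH insert.hyps x by simp
  qed
  have XB: "Xs ({..<dI} \<times> {..<dI}) = X" by (rule eq_matI, insert X, auto simp: Xs_def)
  have "M X $$ (p,q) = (\<Sum>x\<in>{..<dI} \<times> {..<dI}. X $$ x * M (Eu dI (fst x) (snd x)) $$ (p,q))"
    using main[of "{..<dI} \<times> {..<dI}"] XB by simp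
  also have "\<dots> = (\<Sum>k<dI. \<Sum>l<dI. X $$ (k,l) * M (Eu dI k l) $$ (p,q))"
    unfolding sum.cartesian_product by (simp add: case_prod_beta)
  finally show ?thesis .
qed

lemma ext_carrier: "ext_chan n dI dO M X \<in> carrier_mat (n*dO) (n*dO)"
  unfolding ext_chan_def by simp

lemma ext_entry0:
  assumes "i < n*dO" "j < n*dO"
  shows "ext_chan n dI dO M X $$ (i,j) = M (blk dI X (i div dO) (j div dO)) $$ (i mod dO, j mod dO)"
  unfolding ext_chan_def blk_def using assms by simp

lemma ext_entry:
  assumes ch: "quantum_channel dI dO M" and a: "a < n" and p: "p < dO" and b: "b < n" and q: "q < dO"
  shows "ext_chan n dI dO M X $$ (a*dO+p, b*dO+q) =
     (\<Sum>k<dI. \<Sum>l<dI. X $$ (a*dI+k, b*dI+l) * M (Eu dI k l) $$ (p,q))"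
proof -
  have bc: "blk dI X a b \<in> carrier_mat dI dI" unfolding blk_def by simp
  have "ext_chan n dI dO M X $$ (a*dO+p, b*dO+q) = M (blk dI X a b) $$ (p, q)"
    using ext_entry0[OF idx_lt[OF a p] idx_lt[OF b q]] p q by simp
  also have "\<dots> = (\<Sum>k<dI. \<Sum>l<dI. blk dI X a b $$ (k,l) * M (Eu dI k l) $$ (p,q))"
    by (rule chan_lin[OF ch bc p q])
  also have "\<dots> = (\<Sum>k<dI. \<Sum>l<dI. X $$ (a*dI+k, b*dI+l) * M (Eu dI k l) $$ (p,q))"
    by (rule sum.cong, simp, rule sum.cong, simp, simp add: blk_def)
  finally show ?thesis .
qed

lemma ext_conj:
  assumes ch: "quantum_channel dI dO M" and K: "K \<in> carrier_mat n n" and L: "L \<in> carrier_mat n n"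
    and X: "X \<in> carrier_mat (n*dI) (n*dI)"
  shows "ext_chan n dI dO M (tensor_mat K (1\<^sub>m dI) * X * tensor_mat L (1\<^sub>m dI)) =
         tensor_mat K (1\<^sub>m dO) * ext_chan n dI dO M X * tensor_mat L (1\<^sub>m dO)"
proof (rule eq_mat_blocks[of _ n dO])
  show "ext_chan n dI dO M (tensor_mat K (1\<^sub>m dI) * X * tensor_mat L (1\<^sub>m dI)) \<in> carrier_mat (n*dO) (n*dO)"
    by (rule ext_carrier)
  show "tensor_mat K (1\<^sub>m dO) * ext_chan n dI dO M X * tensor_mat L (1\<^sub>m dO) \<in> carrier_mat (n*dO) (n*dO)"
    using tens_carrier[OF K, of dO] tens_carrier[OF L, of dO] ext_carrier[of n dI dO M X] by (simp add: mult_carrier_mat)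
  fix a b p q assume a: "a < n" and b: "b < n" and p: "p < dO" and q: "q < dO"
  let ?Y = "tensor_mat K (1\<^sub>m dI) * X * tensor_mat L (1\<^sub>m dI)"
  let ?c = "\<lambda>k l. M (Eu dI k l) $$ (p,q)"
  have "ext_chan n dI dO M ?Y $$ (a*dO+p, b*dO+q) = (\<Sum>k<dI. \<Sum>l<dI. ?Y $$ (a*dI+k, b*dI+l) * ?c k l)"
    by (rule ext_entry[OF ch a p b q])
  also have "\<dots> = (\<Sum>k<dI. \<Sum>l<dI. \<Sum>c<n. \<Sum>e<n. K $$ (a,c) * X $$ (c*dI+k, e*dI+l) * L $$ (e,b) * ?c k l)"
    by (rule sum.cong, simp, rule sum.cong, simp, simp add: conj_tensor_entry[OF K L X a b] sum_distrib_right)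
  also have "\<dots> = (\<Sum>k<dI. \<Sum>c<n. \<Sum>l<dI. \<Sum>e<n. K $$ (a,c) * X $$ (c*dI+k, e*dI+l) * L $$ (e,b) * ?c k l)"
    by (rule sum.cong, simp, rule sum.swap)
  also have "\<dots> = (\<Sum>c<n. \<Sum>k<dI. \<Sum>l<dI. \<Sum>e<n. K $$ (a,c) * X $$ (c*dI+k, e*dI+l) * L $$ (e,b) * ?c k l)"
    by (rule sum.swap)
  also have "\<dots> = (\<Sum>c<n. \<Sum>k<dI. \<Sum>e<n. \<Sum>l<dI. K $$ (a,c) * X $$ (c*dI+k, e*dI+l) * L $$ (e,b) * ?c k l)"
    by (rule sum.cong, simp, rule sum.cong, simp, rule sum.swap)
  also have "\<dots> = (\<Sum>c<n. \<Sum>e<n. \<Sum>k<dI. \<Sum>l<dI. K $$ (a,c) * X $$ (c*dI+k, e*dI+l) * L $$ (e,b) * ?c k l)"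
    by (rule sum.cong, simp, rule sum.swap)
  also have "\<dots> = (\<Sum>c<n. \<Sum>e<n. K $$ (a,c) * ext_chan n dI dO M X $$ (c*dO+p, e*dO+q) * L $$ (e,b))"
  proof (rule sum.cong, simp, rule sum.cong, simp)
    fix c e assume "c \<in> {..<n}" "e \<in> {..<n}"
    then have ce: "c < n" "e < n" by simp_all
    show "(\<Sum>k<dI. \<Sum>l<dI. K $$ (a,c) * X $$ (c*dI+k, e*dI+l) * L $$ (e,b) * ?c k l) =
          K $$ (a,c) * ext_chan n dI dO M X $$ (c*dO+p, e*dO+q) * L $$ (e,b)"
      unfolding ext_entry[OF ch ce(1) p ce(2) q]
      by (simp add: sum_distrib_left sum_distrib_right mult_ac)
  qed
  also have "\<dots> = (tensor_mat K (1\<^sub>m dO) * ext_chan n dI dO M X * tensor_mat L (1\<^sub>m dO)) $$ (a*dO+p, b*dO+q)"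
    by (rule conj_tensor_entry[OF K L ext_carrier a b p q, symmetric])
  finally show "ext_chan n dI dO M ?Y $$ (a*dO+p, b*dO+q) =
     (tensor_mat K (1\<^sub>m dO) * ext_chan n dI dO M X * tensor_mat L (1\<^sub>m dO)) $$ (a*dO+p, b*dO+q)" .
qed

lemma ext_trace:
  assumes ch: "quantum_channel dI dO M" and X: "X \<in> carrier_mat (n*dI) (n*dI)"
  shows "mtrace (ext_chan n dI dO M X) = mtrace X"
proof -
  note c = chanD[OF ch]
  have bc: "\<And>a. blk dI X a a \<in> carrier_mat dI dI" unfolding blk_def by simp
  have "mtrace (ext_chan n dI dO M X) = (\<Sum>x<n*dO. ext_chan n dI dO M X $$ (x,x))"
    by (rule mtrace_alt[OF ext_carrier])
  also have "\<dots> = (\<Sum>a<n. \<Sum>p<dO. ext_chan n dI dO M X $$ (a*dO+p, a*dO+p))" by (rule sum_split_mult)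
  also have "\<dots> = (\<Sum>a<n. \<Sum>p<dO. M (blk dI X a a) $$ (p,p))"
    by (rule sum.cong, simp, rule sum.cong, simp, subst ext_entry0, simp_all add: idx_lt)
  also have "\<dots> = (\<Sum>a<n. mtrace (M (blk dI X a a)))"
    by (rule sum.cong, simp, rule mtrace_alt[OF c(1)[OF bc], symmetric])
  also have "\<dots> = (\<Sum>a<n. mtrace (blk dI X a a))" using c(4)[OF bc] by simp
  also have "\<dots> = (\<Sum>a<n. \<Sum>k<dI. X $$ (a*dI+k, a*dI+k))"
    by (rule sum.cong, simp, subst mtrace_alt[OF bc], simp add: blk_def)
  also have "\<dots> = (\<Sum>x<n*dI. X $$ (x,x))" by (rule sum_split_mult[symmetric])
  also have "\<dots> = mtrace X" by (rule mtrace_alt[OF X, symmetric])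
  finally show ?thesis .
qed



lemma cprod_conj:
  fixes w y :: "complex vec"
  assumes "w \<in> carrier_vec N" "y \<in> carrier_vec N"
  shows "conjugate w \<bullet> y = (\<Sum>j<N. cnj (w$j) * y$j)"
proof -
  have d: "dim_vec y = N" "dim_vec w = N" using assms by auto
  show ?thesis unfolding scalar_prod_def d lessThan_atLeast0 by (rule sum.cong, simp, simp add: d)
qed

lemma adj_sprod:
  fixes B :: "complex mat" and v y :: "complex vec"
  assumes B: "B \<in> carrier_mat N N" and v: "v \<in> carrier_vec N" and y: "y \<in> carrier_vec N"
  shows "conjugate v \<bullet> (B *\<^sub>v y) = conjugate (mat_adjoint B *\<^sub>v v) \<bullet> y"
proof -
  have BH: "mat_adjoint B \<in> carrier_mat N N" by (rule adj_carrier[OF B])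
  have "conjugate v \<bullet> (B *\<^sub>v y) = (\<Sum>i<N. cnj (v$i) * (B *\<^sub>v y) $ i)"
    using B v by (simp add: scalar_prod_def lessThan_atLeast0)
  also have "\<dots> = (\<Sum>i<N. \<Sum>j<N. cnj (v$i) * B $$ (i,j) * y$j)"
    by (rule sum.cong, simp, simp add: mat_vec_entry[OF B y] sum_distrib_left mult.assoc)
  also have "\<dots> = (\<Sum>j<N. \<Sum>i<N. cnj (v$i) * B $$ (i,j) * y$j)" by (rule sum.swap)
  also have "\<dots> = (\<Sum>j<N. cnj ((mat_adjoint B *\<^sub>v v) $ j) * y $ j)"
  proof (rule sum.cong, simp)
    fix j assume "j \<in> {..<N}" then have j: "j < N" by simp
    have e: "(mat_adjoint B *\<^sub>v v) $ j = (\<Sum>i<N. cnj (B $$ (i,j)) * v $ i)"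
      using mat_vec_entry[OF BH v j] B j by simp
    show "(\<Sum>i<N. cnj (v$i) * B $$ (i,j) * y$j) = cnj ((mat_adjoint B *\<^sub>v v) $ j) * y $ j"
      unfolding e by (simp add: cnj_sum sum_distrib_right sum_distrib_left mult_ac)
  qed
  also have "\<dots> = conjugate (mat_adjoint B *\<^sub>v v) \<bullet> y"
    using BH v y by (subst cprod_conj[of _ N], simp_all)
  finally show ?thesis .
qed

lemma psd_conj:
  assumes X: "psd N X" and B: "B \<in> carrier_mat N N"
  shows "psd N (B * X * mat_adjoint B)"
proof -
  have Xc: "X \<in> carrier_mat N N" using X unfolding psd_def by blast
  have BH: "mat_adjoint B \<in> carrier_mat N N" by (rule adj_carrier[OF B])
  have Yc: "B * X * mat_adjoint B \<in> carrier_mat N N" using B Xc BH by (simp add: mult_carrier_mat)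
  show ?thesis
  proof (rule psd_intro[OF Yc])
    fix v :: "complex vec" assume v: "v \<in> carrier_vec N"
    define w where "w = mat_adjoint B *\<^sub>v v"
    have w: "w \<in> carrier_vec N" unfolding w_def using BH v by simp
    have Xw: "X *\<^sub>v w \<in> carrier_vec N" using Xc w by simp
    have "(B * X * mat_adjoint B) *\<^sub>v v = B *\<^sub>v (X *\<^sub>v w)"
      unfolding w_def using B Xc BH v
      by (simp add: assoc_mult_mat_vec[of _ N N _ N] mult_carrier_mat)
    then have "qfs N (B * X * mat_adjoint B) v = conjugate v \<bullet> (B *\<^sub>v (X *\<^sub>v w))"
      using qf_sum[OF Yc v] by simp
    also have "\<dots> = conjugate w \<bullet> (X *\<^sub>v w)" by (rule adj_sprod[OF B v Xw, folded w_def])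
    also have "\<dots> = qfs N X w" by (rule qf_sum[OF Xc w])
    finally show "0 \<le> qfs N (B * X * mat_adjoint B) v" using psd_ge[OF X w] by simp
  qed
qed

lemma udu_herm:
  assumes U: "U \<in> carrier_mat n n"
  shows "mat_adjoint (U * mat_diag n (\<lambda>i. complex_of_real (g i)) * mat_adjoint U) = U * mat_diag n (\<lambda>i. complex_of_real (g i)) * mat_adjoint U"
proof -
  let ?D = "mat_diag n (\<lambda>i. complex_of_real (g i))"
  have Dc: "?D \<in> carrier_mat n n" by simp
  have Dh: "mat_adjoint ?D = ?D" by (rule eq_matI, simp_all add: mat_diag_def)
  have UD: "U * ?D \<in> carrier_mat n n" using U Dc by (rule mult_carrier_mat)
  have "mat_adjoint (U * ?D * mat_adjoint U) = mat_adjoint (mat_adjoint U) * mat_adjoint (U * ?D)"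
    by (rule adj_mult[OF UD adj_carrier[OF U]])
  also have "\<dots> = U * (?D * mat_adjoint U)" unfolding adj_adj adj_mult[OF U Dc] Dh ..
  also have "\<dots> = U * ?D * mat_adjoint U" by (rule assoc_mult_mat[OF U Dc adj_carrier[OF U], symmetric])
  finally show ?thesis .
qed

lemma assoc6:
  assumes "A \<in> carrier_mat n n" "B \<in> carrier_mat n n" "C \<in> carrier_mat n n" "D \<in> carrier_mat n n"
    "E \<in> carrier_mat n n" "F \<in> carrier_mat n n"
  shows "(A * B * C) * (D * E * F) = A * B * (C * D) * E * F"
  using assms by (simp add: assoc_mult_mat[of _ n n _ n _ n])

lemma udu_mult:
  fixes f g :: "nat \<Rightarrow> complex"
  assumes u: "unitary_mat n U"
  shows "(U * mat_diag n f * mat_adjoint U) * (U * mat_diag n g * mat_adjoint U) = U * mat_diag n (\<lambda>i. f i * g i) * mat_adjoint U"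
proof -
  note Up = unitaryD[OF u]
  have UH: "mat_adjoint U \<in> carrier_mat n n" by (rule adj_carrier[OF Up(1)])
  have F: "mat_diag n f \<in> carrier_mat n n" "mat_diag n g \<in> carrier_mat n n" by simp_all
  have "(U * mat_diag n f * mat_adjoint U) * (U * mat_diag n g * mat_adjoint U) =
        U * mat_diag n f * (mat_adjoint U * U) * mat_diag n g * mat_adjoint U"
    by (rule assoc6[OF Up(1) F(1) UH Up(1) F(2) UH])
  also have "\<dots> = U * mat_diag n f * mat_diag n g * mat_adjoint U"
    using right_mult_one_mat[OF mult_carrier_mat[OF Up(1) F(1)]] Up(2) by simp
  also have "\<dots> = U * (mat_diag n f * mat_diag n g) * mat_adjoint U"
    using assoc_mult_mat[OF Up(1) F] by simp
  also have "\<dots> = U * mat_diag n (\<lambda>i. f i * g i) * mat_adjoint U" by (simp add: mat_diag_diag)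
  finally show ?thesis .
qed

lemma qfs_col:
  assumes U: "U \<in> carrier_mat n n" and Q: "Q \<in> carrier_mat n n" and k: "k < n"
  shows "qfs n Q (col U k) = (mat_adjoint U * Q * U) $$ (k,k)"
  unfolding mult3_entry[OF adj_carrier[OF U] Q U k k] qfs_def using U k by simp



lemma proj_fix:
  assumes p: "psd (n*m) V" and u: "unitary_mat n U"
    and Q: "ptrace_right n m V = U * mat_diag n (\<lambda>i. complex_of_real (dq i)) * mat_adjoint U"
    and dn: "\<And>k. k < n \<Longrightarrow> dq k \<ge> 0"
  shows "tensor_mat (U * mat_diag n (\<lambda>i. complex_of_real (if dq i > 0 then 1 else 0)) * mat_adjoint U) (1\<^sub>m m) * V *
         tensor_mat (U * mat_diag n (\<lambda>i. complex_of_real (if dq i > 0 then 1 else 0)) * mat_adjoint U) (1\<^sub>m m) = V"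
proof -
  note Up = unitaryD[OF u]
  have Vc: "V \<in> carrier_mat (n*m) (n*m)" using p unfolding psd_def by blast
  define pk where "pk = (\<lambda>i. complex_of_real (if dq i > 0 then 1 else 0))"
  define P where "P = U * mat_diag n pk * mat_adjoint U"
  have Pc: "P \<in> carrier_mat n n" unfolding P_def
    by (rule mult_carrier_mat[OF mult_carrier_mat[OF Up(1) mat_diag_dim] adj_carrier[OF Up(1)]])
  have Pe: "\<And>a c. a < n \<Longrightarrow> c < n \<Longrightarrow> P $$ (a,c) = (\<Sum>k<n. U $$ (a,k) * pk k * cnj (U $$ (c,k)))"
    unfolding P_def by (rule udu_entry[OF Up(1)])
  have del: "\<And>e b. e < n \<Longrightarrow> b < n \<Longrightarrow> (\<Sum>k<n. U $$ (e,k) * cnj (U $$ (b,k))) = (if e = b then 1 else 0)"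
  proof -
    fix e b assume eb: "e < n" "b < n"
    have "(U * mat_adjoint U) $$ (e,b) = (\<Sum>k<n. U $$ (e,k) * mat_adjoint U $$ (k,b))"
      by (rule mult_entry[OF Up(1) adj_carrier[OF Up(1)] eb])
    then show "(\<Sum>k<n. U $$ (e,k) * cnj (U $$ (b,k))) = (if e = b then 1 else 0)"
      using Up(3) Up(1) eb by simp
  qed
  have Qd: "mat_adjoint U * ptrace_right n m V * U = mat_diag n (\<lambda>i. complex_of_real (dq i))"
    by (rule unitary_conj_diag[OF u Q], simp)
  have colc: "\<And>k. col U k \<in> carrier_vec n" using Up(1) unfolding carrier_mat_def carrier_vec_def by simp
  have qz: "\<And>k q. k < n \<Longrightarrow> \<not> dq k > 0 \<Longrightarrow> q < m \<Longrightarrow> qfs (n*m) V (tvec n m (col U k) q) = 0"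
  proof -
    fix k q assume k: "k < n" and nk: "\<not> dq k > 0" and q: "q < m"
    have "(\<Sum>q<m. qfs (n*m) V (tvec n m (col U k) q)) = qfs n (ptrace_right n m V) (col U k)"
      by (rule ptrace_qf[OF Vc colc, symmetric])
    also have "\<dots> = (mat_adjoint U * ptrace_right n m V * U) $$ (k,k)" by (rule qfs_col[OF Up(1) ptrace_carrier k])
    also have "\<dots> = complex_of_real (dq k)" unfolding Qd using k by (simp add: mat_diag_def)
    also have "\<dots> = 0" using dn[OF k] nk by simp
    finally have s0: "(\<Sum>q<m. qfs (n*m) V (tvec n m (col U k) q)) = 0" .
    have nn: "\<And>q. q \<in> {..<m} \<Longrightarrow> 0 \<le> qfs (n*m) V (tvec n m (col U k) q)" by (rule psd_ge[OF p tvec_carrier])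
    show "qfs (n*m) V (tvec n m (col U k) q) = 0" using s0 sum_nonneg_eq_0_iff[OF finite_lessThan nn] q by simp
  qed
  have tve: "\<And>k q j. k < n \<Longrightarrow> j < n*m \<Longrightarrow> tvec n m (col U k) q $ j = (if j mod m = q then 1 else 0) * U $$ (j div m, k)"
  proof -
    fix k q j assume k: "k < n" and j: "j < n*m"
    have "j div m < n" using divmod_lt[OF j] by simp
    then show "tvec n m (col U k) q $ j = (if j mod m = q then 1 else 0) * U $$ (j div m, k)"
      using tvec_idx[OF j] Up(1) k by simp
  qed
  have colnull: "\<And>k q z. k < n \<Longrightarrow> \<not> dq k > 0 \<Longrightarrow> q < m \<Longrightarrow> z < n*m \<Longrightarrow> (\<Sum>c<n. V $$ (z, c*m+q) * U $$ (c,k)) = 0"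
  proof -
    fix k q z assume k: "k < n" and nk: "\<not> dq k > 0" and q: "q < m" and z: "z < n*m"
    have "(\<Sum>j<n*m. V $$ (z,j) * tvec n m (col U k) q $ j) = 0"
      by (rule psd_null[OF p tvec_carrier qz[OF k nk q] z])
    moreover have "(\<Sum>j<n*m. V $$ (z,j) * tvec n m (col U k) q $ j) = (\<Sum>j<n*m. (V $$ (z,j) * U $$ (j div m, k)) * (if j mod m = q then 1 else 0))"
      by (rule sum.cong, simp, simp add: tve[OF k])
    moreover have "\<dots> = (\<Sum>c<n. V $$ (z, c*m+q) * U $$ (c,k))" using q by (subst sum_sparse_r[OF q], simp)
    ultimately show "(\<Sum>c<n. V $$ (z, c*m+q) * U $$ (c,k)) = 0" by simp
  qed
  have rownull: "\<And>k q z. k < n \<Longrightarrow> \<not> dq k > 0 \<Longrightarrow> q < m \<Longrightarrow> z < n*m \<Longrightarrow> (\<Sum>c<n. cnj (U $$ (c,k)) * V $$ (c*m+q, z)) = 0"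
  proof -
    fix k q z assume k: "k < n" and nk: "\<not> dq k > 0" and q: "q < m" and z: "z < n*m"
    have "(\<Sum>j<n*m. cnj (tvec n m (col U k) q $ j) * V $$ (j,z)) = 0"
      by (rule psd_null_row[OF p tvec_carrier qz[OF k nk q] z])
    moreover have "(\<Sum>j<n*m. cnj (tvec n m (col U k) q $ j) * V $$ (j,z)) = (\<Sum>j<n*m. (if j mod m = q then 1 else 0) * (cnj (U $$ (j div m, k)) * V $$ (j,z)))"
      by (rule sum.cong, simp, simp add: tve[OF k])
    moreover have "\<dots> = (\<Sum>c<n. cnj (U $$ (c,k)) * V $$ (c*m+q, z))" using q by (subst sum_sparse[OF q], simp)
    ultimately show "(\<Sum>c<n. cnj (U $$ (c,k)) * V $$ (c*m+q, z)) = 0" by simp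
  qed
  have right: "\<And>z b q. z < n*m \<Longrightarrow> b < n \<Longrightarrow> q < m \<Longrightarrow> (\<Sum>e<n. V $$ (z, e*m+q) * P $$ (e,b)) = V $$ (z, b*m+q)"
  proof -
    fix z b q assume z: "z < n*m" and b: "b < n" and q: "q < m"
    have fk: "\<And>k. k \<in> {..<n} \<Longrightarrow> pk k * (\<Sum>e<n. V $$ (z, e*m+q) * U $$ (e,k)) = (\<Sum>e<n. V $$ (z, e*m+q) * U $$ (e,k))"
    proof -
      fix k assume "k \<in> {..<n}" then have k: "k < n" by simp
      show "pk k * (\<Sum>e<n. V $$ (z, e*m+q) * U $$ (e,k)) = (\<Sum>e<n. V $$ (z, e*m+q) * U $$ (e,k))"
      proof (cases "dq k > 0")
        case True then show ?thesis unfolding pk_def by simp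
      next
        case False then show ?thesis using colnull[OF k False q z] by simp
      qed
    qed
    have "(\<Sum>e<n. V $$ (z, e*m+q) * P $$ (e,b)) = (\<Sum>e<n. \<Sum>k<n. V $$ (z, e*m+q) * U $$ (e,k) * pk k * cnj (U $$ (b,k)))"
      by (rule sum.cong, simp, simp add: Pe b sum_distrib_left mult.assoc)
    also have "\<dots> = (\<Sum>k<n. \<Sum>e<n. V $$ (z, e*m+q) * U $$ (e,k) * pk k * cnj (U $$ (b,k)))" by (rule sum.swap)
    also have "\<dots> = (\<Sum>k<n. (pk k * (\<Sum>e<n. V $$ (z, e*m+q) * U $$ (e,k))) * cnj (U $$ (b,k)))"
      by (rule sum.cong, simp, simp add: sum_distrib_left sum_distrib_right mult_ac)
    also have "\<dots> = (\<Sum>k<n. (\<Sum>e<n. V $$ (z, e*m+q) * U $$ (e,k)) * cnj (U $$ (b,k)))"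
      by (rule sum.cong, simp, simp add: fk)
    also have "\<dots> = (\<Sum>k<n. \<Sum>e<n. V $$ (z, e*m+q) * (U $$ (e,k) * cnj (U $$ (b,k))))"
      by (simp add: sum_distrib_right mult.assoc)
    also have "\<dots> = (\<Sum>e<n. \<Sum>k<n. V $$ (z, e*m+q) * (U $$ (e,k) * cnj (U $$ (b,k))))" by (rule sum.swap)
    also have "\<dots> = (\<Sum>e<n. V $$ (z, e*m+q) * (if e = b then 1 else 0))"
      by (rule sum.cong, simp, simp add: sum_distrib_left[symmetric] del b)
    also have "\<dots> = V $$ (z, b*m+q)" using b by (simp add: sum_delta_r)
    finally show "(\<Sum>e<n. V $$ (z, e*m+q) * P $$ (e,b)) = V $$ (z, b*m+q)" .
  qed
  have left: "\<And>y a p. y < n*m \<Longrightarrow> a < n \<Longrightarrow> p < m \<Longrightarrow> (\<Sum>c<n. P $$ (a,c) * V $$ (c*m+p, y)) = V $$ (a*m+p, y)"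
  proof -
    fix y a p assume y: "y < n*m" and a: "a < n" and p: "p < m"
    have fk: "\<And>k. k \<in> {..<n} \<Longrightarrow> pk k * (\<Sum>c<n. cnj (U $$ (c,k)) * V $$ (c*m+p, y)) = (\<Sum>c<n. cnj (U $$ (c,k)) * V $$ (c*m+p, y))"
    proof -
      fix k assume "k \<in> {..<n}" then have k: "k < n" by simp
      show "pk k * (\<Sum>c<n. cnj (U $$ (c,k)) * V $$ (c*m+p, y)) = (\<Sum>c<n. cnj (U $$ (c,k)) * V $$ (c*m+p, y))"
      proof (cases "dq k > 0")
        case True then show ?thesis unfolding pk_def by simp
      next
        case False then show ?thesis using rownull[OF k False p y] by simp
      qed
    qed
    have "(\<Sum>c<n. P $$ (a,c) * V $$ (c*m+p, y)) = (\<Sum>c<n. \<Sum>k<n. U $$ (a,k) * pk k * cnj (U $$ (c,k)) * V $$ (c*m+p, y))"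
      by (rule sum.cong, simp, simp add: Pe a sum_distrib_right)
    also have "\<dots> = (\<Sum>k<n. \<Sum>c<n. U $$ (a,k) * pk k * cnj (U $$ (c,k)) * V $$ (c*m+p, y))" by (rule sum.swap)
    also have "\<dots> = (\<Sum>k<n. U $$ (a,k) * (pk k * (\<Sum>c<n. cnj (U $$ (c,k)) * V $$ (c*m+p, y))))"
      by (rule sum.cong, simp, simp add: sum_distrib_left mult_ac)
    also have "\<dots> = (\<Sum>k<n. U $$ (a,k) * (\<Sum>c<n. cnj (U $$ (c,k)) * V $$ (c*m+p, y)))"
      by (rule sum.cong, simp, simp add: fk)
    also have "\<dots> = (\<Sum>k<n. \<Sum>c<n. (U $$ (a,k) * cnj (U $$ (c,k))) * V $$ (c*m+p, y))"
      by (simp add: sum_distrib_left mult.assoc)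
    also have "\<dots> = (\<Sum>c<n. \<Sum>k<n. (U $$ (a,k) * cnj (U $$ (c,k))) * V $$ (c*m+p, y))" by (rule sum.swap)
    also have "\<dots> = (\<Sum>c<n. if a = c then V $$ (c*m+p, y) else 0)"
      by (rule sum.cong, simp, simp add: sum_distrib_right[symmetric] del a)
    also have "\<dots> = V $$ (a*m+p, y)" using a by simp
    finally show "(\<Sum>c<n. P $$ (a,c) * V $$ (c*m+p, y)) = V $$ (a*m+p, y)" .
  qed
  have "tensor_mat P (1\<^sub>m m) * V * tensor_mat P (1\<^sub>m m) = V"
  proof (rule eq_mat_blocks[of _ n m])
    show "tensor_mat P (1\<^sub>m m) * V * tensor_mat P (1\<^sub>m m) \<in> carrier_mat (n*m) (n*m)"
      using tens_carrier[OF Pc, of m] Vc by (simp add: mult_carrier_mat)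
    show "V \<in> carrier_mat (n*m) (n*m)" by (rule Vc)
    fix a b p q assume a: "a < n" and b: "b < n" and p: "p < m" and q: "q < m"
    have "(tensor_mat P (1\<^sub>m m) * V * tensor_mat P (1\<^sub>m m)) $$ (a*m+p, b*m+q) =
          (\<Sum>c<n. \<Sum>e<n. P $$ (a,c) * V $$ (c*m+p, e*m+q) * P $$ (e,b))"
      by (rule conj_tensor_entry[OF Pc Pc Vc a b p q])
    also have "\<dots> = (\<Sum>c<n. P $$ (a,c) * (\<Sum>e<n. V $$ (c*m+p, e*m+q) * P $$ (e,b)))"
      by (simp add: sum_distrib_left mult.assoc)
    also have "\<dots> = (\<Sum>c<n. P $$ (a,c) * V $$ (c*m+p, b*m+q))"
      by (rule sum.cong, simp, simp add: right[OF idx_lt[OF _ p] b q])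
    also have "\<dots> = V $$ (a*m+p, b*m+q)" by (rule left[OF idx_lt[OF b q] a p])
    finally show "(tensor_mat P (1\<^sub>m m) * V * tensor_mat P (1\<^sub>m m)) $$ (a*m+p, b*m+q) = V $$ (a*m+p, b*m+q)" .
  qed
  then show ?thesis unfolding P_def pk_def .
qed



lemma inv_sqrt_decomp:
  assumes p: "psd n Q"
  shows "\<exists>U d. unitary_mat n U \<and> Q = U * mat_diag n (\<lambda>i. complex_of_real (d i)) * mat_adjoint U \<and>
     inv_sqrt_supp Q = U * mat_diag n (\<lambda>i. complex_of_real (if d i > 0 then 1 / sqrt (d i) else 0)) * mat_adjoint U \<and>
     (\<forall>k<n. d k \<ge> 0)"
proof -
  have Qc: "Q \<in> carrier_mat n n" using p unfolding psd_def by blast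
  then have dr: "dim_row Q = n" by simp
  let ?f = "\<lambda>x::real. if x > 0 then 1 / sqrt x else 0"
  let ?P = "\<lambda>B. \<exists>U d. unitary_mat (dim_row Q) U \<and> Q = U * mat_diag (dim_row Q) (\<lambda>i. complex_of_real (d i)) * mat_adjoint U \<and>
      B = U * mat_diag (dim_row Q) (\<lambda>i. complex_of_real (?f (d i))) * mat_adjoint U"
  obtain U0 d0 where "unitary_mat n U0" "Q = U0 * mat_diag n (\<lambda>i. complex_of_real (d0 i)) * mat_adjoint U0"
    using psd_decomp[OF p] by blast
  then have ex: "\<exists>B. ?P B" unfolding dr by blast
  have "?P (inv_sqrt_supp Q)" unfolding inv_sqrt_supp_def mat_fun_def by (rule someI_ex[OF ex])
  then obtain U d where u: "unitary_mat n U" and Qe: "Q = U * mat_diag n (\<lambda>i. complex_of_real (d i)) * mat_adjoint U"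
    and Se: "inv_sqrt_supp Q = U * mat_diag n (\<lambda>i. complex_of_real (?f (d i))) * mat_adjoint U"
    unfolding dr by blast
  have "\<forall>k<n. d k \<ge> 0" using psd_diag_nonneg[OF p u Qe] by blast
  then show ?thesis using u Qe Se by blast
qed

lemma diag_proj_eq:
  "(\<lambda>i. complex_of_real (sqrt (d i)) * complex_of_real (if d i > 0 then 1 / sqrt (d i) else 0)) =
   (\<lambda>i. complex_of_real (if (d i::real) > 0 then 1 else 0))"
  "(\<lambda>i. complex_of_real (if d i > 0 then 1 / sqrt (d i) else 0) * complex_of_real (sqrt (d i))) =
   (\<lambda>i. complex_of_real (if (d i::real) > 0 then 1 else 0))"
  by (rule ext, simp)+

theorem claimB4:
  fixes dR dA1 dB1 dA2 dB2 :: nat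
    and M :: "complex mat \<Rightarrow> complex mat"
    and \<omega> \<rho> \<nu> :: "complex mat"
  assumes chan: "quantum_channel dR (dA2*dB2) M"
    and classical: "classical_output_B dR dA2 dB2 M"
    and nonsig: "\<forall>d' \<omega>R. density (d'*dR) \<omega>R \<longrightarrow>
        ptrace_mid d' dA2 dB2 (ext_chan d' dR (dA2*dB2) M \<omega>R) =
        tensor_mat (ptrace_right d' dR \<omega>R) (ptrace_left (d'*dA2) dB2 (ext_chan d' dR (dA2*dB2) M \<omega>R))"
    and \<omega>: "density (dA1*dB1*dR) \<omega>"
    and \<rho>: "\<rho> = ext_chan (dA1*dB1) dR (dA2*dB2) M \<omega>"
    and \<nu>: "density (dA1*dB1*dA2*dB2) \<nu>"
    and cond: "cond_op (dA1*dB1) (dA2*dB2) \<nu> = cond_op (dA1*dB1) (dA2*dB2) \<rho>"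
    and supp: "supp (ptrace_right (dA1*dB1) (dA2*dB2) \<nu>) = supp (ptrace_right (dA1*dB1) (dA2*dB2) \<rho>)"
  shows "\<exists>\<omega>'. density (dA1*dB1*dR) \<omega>' \<and> ext_chan (dA1*dB1) dR (dA2*dB2) M \<omega>' = \<nu>"
proof -
  define n where "n = dA1*dB1"
  define dO where "dO = dA2*dB2"
  have ch: "quantum_channel dR dO M" using chan unfolding dO_def .
  note c = chanD[OF ch]
  have om: "density (n*dR) \<omega>" using \<omega> unfolding n_def .
  have omp: "psd (n*dR) \<omega>" and omt: "mtrace \<omega> = 1" using om unfolding density_def by blast+
  have omc: "\<omega> \<in> carrier_mat (n*dR) (n*dR)" using omp unfolding psd_def by blast
  have rho: "\<rho> = ext_chan n dR dO M \<omega>" using \<rho> unfolding n_def dO_def .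
  have e4: "dA1*dB1*dA2*dB2 = n*dO" unfolding n_def dO_def by (simp add: mult.assoc)
  have nud: "density (n*dO) \<nu>" using \<nu> unfolding e4 .
  have nup: "psd (n*dO) \<nu>" and nut: "mtrace \<nu> = 1" using nud unfolding density_def by blast+
  have nuc: "\<nu> \<in> carrier_mat (n*dO) (n*dO)" using nup unfolding psd_def by blast
  have cond': "cond_op n dO \<nu> = cond_op n dO \<rho>" using cond unfolding n_def dO_def .
  have rhop: "psd (n*dO) \<rho>" unfolding rho by (rule c(5)[OF omp])
  have rhoc: "\<rho> \<in> carrier_mat (n*dO) (n*dO)" using rhop unfolding psd_def by blast
  define Q where "Q = ptrace_right n dO \<nu>"
  define P where "P = ptrace_right n dO \<rho>"
  have Qp: "psd n Q" unfolding Q_def by (rule ptrace_psd[OF nup])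
  have Pp: "psd n P" unfolding P_def by (rule ptrace_psd[OF rhop])
  obtain UQ dq where uQ: "unitary_mat n UQ"
    and Qe: "Q = UQ * mat_diag n (\<lambda>i. complex_of_real (dq i)) * mat_adjoint UQ"
    and SQe: "inv_sqrt_supp Q = UQ * mat_diag n (\<lambda>i. complex_of_real (if dq i > 0 then 1 / sqrt (dq i) else 0)) * mat_adjoint UQ"
    and dqn: "\<forall>k<n. dq k \<ge> 0"
    using inv_sqrt_decomp[OF Qp] by blast
  obtain UP dp where uP: "unitary_mat n UP"
    and SPe: "inv_sqrt_supp P = UP * mat_diag n (\<lambda>i. complex_of_real (if dp i > 0 then 1 / sqrt (dp i) else 0)) * mat_adjoint UP"
    using inv_sqrt_decomp[OF Pp] by blast
  note UQp = unitaryD[OF uQ]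
  note UPp = unitaryD[OF uP]
  define SQ where "SQ = inv_sqrt_supp Q"
  define SP where "SP = inv_sqrt_supp P"
  define Qh where "Qh = UQ * mat_diag n (\<lambda>i. complex_of_real (sqrt (dq i))) * mat_adjoint UQ"
  have udc: "\<And>U g. U \<in> carrier_mat n n \<Longrightarrow> U * mat_diag n g * mat_adjoint U \<in> carrier_mat n n"
    by (rule mult_carrier_mat[OF mult_carrier_mat[OF _ mat_diag_dim] adj_carrier])
  have SQc: "SQ \<in> carrier_mat n n" unfolding SQ_def SQe by (rule udc[OF UQp(1)])
  have SPc: "SP \<in> carrier_mat n n" unfolding SP_def SPe by (rule udc[OF UPp(1)])
  have Qhc: "Qh \<in> carrier_mat n n" unfolding Qh_def by (rule udc[OF UQp(1)])
  have SPh: "mat_adjoint SP = SP" unfolding SP_def SPe by (rule udu_herm[OF UPp(1)])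
  have Qhh: "mat_adjoint Qh = Qh" unfolding Qh_def by (rule udu_herm[OF UQp(1)])
  define K where "K = Qh * SP"
  have Kc: "K \<in> carrier_mat n n" unfolding K_def using Qhc SPc by (rule mult_carrier_mat)
  have KH: "mat_adjoint K = SP * Qh" unfolding K_def adj_mult[OF Qhc SPc] SPh Qhh ..
  have KHc: "mat_adjoint K \<in> carrier_mat n n" by (rule adj_carrier[OF Kc])
  define B where "B = tensor_mat K (1\<^sub>m dR)"
  have Bc: "B \<in> carrier_mat (n*dR) (n*dR)" unfolding B_def by (rule tens_carrier[OF Kc])
  have BH: "mat_adjoint B = tensor_mat (mat_adjoint K) (1\<^sub>m dR)" unfolding B_def by (rule adj_tensor[OF Kc])
  define \<omega>' where "\<omega>' = B * \<omega> * mat_adjoint B"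
  have om'p: "psd (n*dR) \<omega>'" unfolding \<omega>'_def by (rule psd_conj[OF omp Bc])
  have om'c: "\<omega>' \<in> carrier_mat (n*dR) (n*dR)" using om'p unfolding psd_def by blast
  let ?T = "\<lambda>X. tensor_mat X (1\<^sub>m dO)"
  have Tc: "\<And>X. X \<in> carrier_mat n n \<Longrightarrow> ?T X \<in> carrier_mat (n*dO) (n*dO)" by (rule tens_carrier)
  have KH': "mat_adjoint (Qh * SP) = SP * Qh" using KH unfolding K_def .
  define PQ where "PQ = UQ * mat_diag n (\<lambda>i. complex_of_real (if dq i > 0 then 1 else 0)) * mat_adjoint UQ"
  have PQ1: "Qh * SQ = PQ"
    unfolding PQ_def Qh_def SQ_def SQe udu_mult[OF uQ] diag_proj_eq ..
  have PQ2: "SQ * Qh = PQ"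
    unfolding PQ_def Qh_def SQ_def SQe udu_mult[OF uQ] diag_proj_eq ..
  have condr: "?T SP * \<rho> * ?T SP = cond_op n dO \<rho>" unfolding cond_op_def Let_def SP_def P_def ..
  have condn: "cond_op n dO \<nu> = ?T SQ * \<nu> * ?T SQ" unfolding cond_op_def Let_def SQ_def Q_def ..
  have "ext_chan n dR dO M \<omega>' = ?T K * \<rho> * ?T (mat_adjoint K)"
    unfolding \<omega>'_def B_def adj_tensor[OF Kc] rho by (rule ext_conj[OF ch Kc KHc omc])
  also have "\<dots> = (?T Qh * ?T SP) * \<rho> * (?T SP * ?T Qh)"
    unfolding K_def KH' tensor_mult[OF Qhc SPc] tensor_mult[OF SPc Qhc] ..
  also have "\<dots> = ?T Qh * (?T SP * \<rho> * ?T SP) * ?T Qh"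
    by (rule assoc5[OF Tc[OF Qhc] Tc[OF SPc] rhoc Tc[OF SPc] Tc[OF Qhc], symmetric])
  also have "\<dots> = ?T Qh * (?T SQ * \<nu> * ?T SQ) * ?T Qh"
    unfolding condr cond'[symmetric] condn ..
  also have "\<dots> = (?T Qh * ?T SQ) * \<nu> * (?T SQ * ?T Qh)"
    by (rule assoc5[OF Tc[OF Qhc] Tc[OF SQc] nuc Tc[OF SQc] Tc[OF Qhc]])
  also have "\<dots> = ?T PQ * \<nu> * ?T PQ"
    unfolding tensor_mult[OF Qhc SQc] tensor_mult[OF SQc Qhc] PQ1 PQ2 ..
  also have "\<dots> = \<nu>"
    unfolding PQ_def by (rule proj_fix[OF nup uQ Qe[unfolded Q_def]], insert dqn, simp)
  finally have ext_eq: "ext_chan n dR dO M \<omega>' = \<nu>" .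
  have "mtrace \<omega>' = mtrace (ext_chan n dR dO M \<omega>')" by (rule ext_trace[OF ch om'c, symmetric])
  also have "\<dots> = 1" using ext_eq nut by simp
  finally have "density (n*dR) \<omega>'" unfolding density_def using om'p by simp
  then show ?thesis using ext_eq unfolding n_def dO_def by blast
qed

end
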